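(* The language $L\subseteq\{a,b\}^*$ given by the regular expression $(a(ab)^*b)^*$ is definable in $FO[<]$ but not in $FO^2[<,\mathrm{Inv}]$.
   Context: $FO[<]$ is first-order logic over finite words with the order $<$ on positions and unary predicates $a(x)$ (letter at position $x$ is $a$). $FO^2[<,\mathrm{Inv}]$ is its two-variable fragment extended by binary predicates $a(x,y)$ meaning $\exists z(x<z\wedge z<y\wedge a(z))$ (only two variables may be used in formulas). A language is definable in a logic if it is the set of words satisfying some sentence of that logic. *)

theory Defs
  imports Main
begin

datatype letter = A | B

type_synonym word = "letter list"

inductive_set kleene_star :: "word set \<Rightarrow> word set" for L :: "word set" where
  star_nil: "[] \<in> kleene_star L"
| star_app: "u \<in> L \<Longrightarrow> v \<in> kleene_star L \<Longrightarrow> u @ v \<in> kleene_star L"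

definition block_lang :: "word set" where
  "block_lang = {[A] @ concat (replicate n [A, B]) @ [B] | n. True}"

definition L_lang :: "word set" where
  "L_lang = kleene_star block_lang"

datatype fo =
    FLt nat nat
  | FEq nat nat
  | FLet letter nat
  | FNot fo
  | FAnd fo fo
  | FEx nat fo

fun fo_fv :: "fo \<Rightarrow> nat set" where
  "fo_fv (FLt x y) = {x, y}"
| "fo_fv (FEq x y) = {x, y}"
| "fo_fv (FLet c x) = {x}"
| "fo_fv (FNot \<phi>) = fo_fv \<phi>"
| "fo_fv (FAnd \<phi> \<psi>) = fo_fv \<phi> \<union> fo_fv \<psi>"
| "fo_fv (FEx x \<phi>) = fo_fv \<phi> - {x}"

fun fo_sat :: "word \<Rightarrow> (nat \<Rightarrow> nat) \<Rightarrow> fo \<Rightarrow> bool" where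
  "fo_sat w s (FLt x y) = (s x < s y)"
| "fo_sat w s (FEq x y) = (s x = s y)"
| "fo_sat w s (FLet c x) = (s x < length w \<and> w ! s x = c)"
| "fo_sat w s (FNot \<phi>) = (\<not> fo_sat w s \<phi>)"
| "fo_sat w s (FAnd \<phi> \<psi>) = (fo_sat w s \<phi> \<and> fo_sat w s \<psi>)"
| "fo_sat w s (FEx x \<phi>) = (\<exists>i < length w. fo_sat w (s(x := i)) \<phi>)"

definition fo_definable :: "word set \<Rightarrow> bool" where
  "fo_definable L \<longleftrightarrow>
     (\<exists>\<phi>. fo_fv \<phi> = {} \<and> (\<forall>w. w \<in> L \<longleftrightarrow> fo_sat w (\<lambda>_. 0) \<phi>))"

text \<open>Exactly two variables X and Y (which may be requantified).
  FBetween c x y means: exists z with x < z < y and letter c at z.\<close>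

datatype var2 = X | Y

datatype fo2 =
    F2Lt var2 var2
  | F2Eq var2 var2
  | F2Let letter var2
  | F2Between letter var2 var2
  | F2Not fo2
  | F2And fo2 fo2
  | F2Ex var2 fo2

fun fo2_fv :: "fo2 \<Rightarrow> var2 set" where
  "fo2_fv (F2Lt x y) = {x, y}"
| "fo2_fv (F2Eq x y) = {x, y}"
| "fo2_fv (F2Let c x) = {x}"
| "fo2_fv (F2Between c x y) = {x, y}"
| "fo2_fv (F2Not \<phi>) = fo2_fv \<phi>"
| "fo2_fv (F2And \<phi> \<psi>) = fo2_fv \<phi> \<union> fo2_fv \<psi>"
| "fo2_fv (F2Ex x \<phi>) = fo2_fv \<phi> - {x}"

fun fo2_sat :: "word \<Rightarrow> (var2 \<Rightarrow> nat) \<Rightarrow> fo2 \<Rightarrow> bool" where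
  "fo2_sat w s (F2Lt x y) = (s x < s y)"
| "fo2_sat w s (F2Eq x y) = (s x = s y)"
| "fo2_sat w s (F2Let c x) = (s x < length w \<and> w ! s x = c)"
| "fo2_sat w s (F2Between c x y) =
     (\<exists>z. s x < z \<and> z < s y \<and> z < length w \<and> w ! z = c)"
| "fo2_sat w s (F2Not \<phi>) = (\<not> fo2_sat w s \<phi>)"
| "fo2_sat w s (F2And \<phi> \<psi>) = (fo2_sat w s \<phi> \<and> fo2_sat w s \<psi>)"
| "fo2_sat w s (F2Ex x \<phi>) = (\<exists>i < length w. fo2_sat w (s(x := i)) \<phi>)"

definition fo2_inv_definable :: "word set \<Rightarrow> bool" where
  "fo2_inv_definable L \<longleftrightarrow>
     (\<exists>\<phi>. fo2_fv \<phi> = {} \<and> (\<forall>w. w \<in> L \<longleftrightarrow> fo2_sat w (\<lambda>_. 0) \<phi>))"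

end

theory Submission
  imports Defs
begin

fun fdepth :: "fo2 \<Rightarrow> nat" where
  "fdepth (F2Not \<phi>) = fdepth \<phi>"
| "fdepth (F2And \<phi> \<psi>) = max (fdepth \<phi>) (fdepth \<psi>)"
| "fdepth (F2Ex x \<phi>) = Suc (fdepth \<phi>)"
| "fdepth _ = 0"

definition loc :: "word \<Rightarrow> nat \<Rightarrow> word \<Rightarrow> nat \<Rightarrow> bool" where
  "loc u p v p' \<longleftrightarrow>
    (\<forall>d\<le>3. (p + d < length u \<longleftrightarrow> p' + d < length v) \<and> (p + d < length u \<longrightarrow> u!(p+d) = v!(p'+d)))
  \<and> (\<forall>d\<le>3. (d \<le> p \<longleftrightarrow> d \<le> p') \<and> (d \<le> p \<longrightarrow> u!(p-d) = v!(p'-d)))"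

fun eqv :: "nat \<Rightarrow> word \<Rightarrow> nat \<Rightarrow> word \<Rightarrow> nat \<Rightarrow> bool" where
  "eqv 0 u p v p' = loc u p v p'"
| "eqv (Suc k) u p v p' = (loc u p v p' \<and>
    (\<forall>d\<le>3. p + d < length u \<longrightarrow> eqv k u (p+d) v (p'+d)) \<and>
    (\<forall>d\<le>3. d \<le> p \<longrightarrow> eqv k u (p-d) v (p'-d)) \<and>
    (\<forall>q<length u. q + 3 < p \<longrightarrow> (\<exists>q'<length v. q' + 3 < p' \<and> eqv k u q v q')) \<and>
    (\<forall>q'<length v. q' + 3 < p' \<longrightarrow> (\<exists>q<length u. q + 3 < p \<and> eqv k u q v q')) \<and>
    (\<forall>q<length u. p + 3 < q \<longrightarrow> (\<exists>q'<length v. p' + 3 < q' \<and> eqv k u q v q')) \<and>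
    (\<forall>q'<length v. p' + 3 < q' \<longrightarrow> (\<exists>q<length u. p + 3 < q \<and> eqv k u q v q')))"

definition samerel :: "nat \<Rightarrow> nat \<Rightarrow> nat \<Rightarrow> nat \<Rightarrow> bool" where
  "samerel a b a' b' \<longleftrightarrow> (a < b \<longleftrightarrow> a' < b') \<and>
     (\<forall>d\<le>3. (b = a + d \<longleftrightarrow> b' = a' + d) \<and> (a = b + d \<longleftrightarrow> a' = b' + d))"

definition no3 :: "word \<Rightarrow> bool" where
  "no3 w \<longleftrightarrow> (\<forall>i c. i + 2 < length w \<longrightarrow> (\<exists>j. i \<le> j \<and> j \<le> i + 2 \<and> w!j = c))"

lemma eqv_loc: "eqv k u p v p' \<Longrightarrow> loc u p v p'"
  by (cases k) (simp_all only: eqv.simps)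

lemma samerel_sym: "samerel a b a' b' \<Longrightarrow> samerel b a b' a'"
  unfolding samerel_def by (auto simp: not_less)

lemma samerel_refl: "samerel a a a' a'"
  unfolding samerel_def by auto

lemma betw_shift: "(\<exists>z. (p::nat)<z \<and> z<p+d \<and> P z) \<longleftrightarrow> (\<exists>j. 0<j \<and> j<d \<and> P (p+j))"
proof
  assume "\<exists>z. p<z \<and> z<p+d \<and> P z"
  then obtain z where "p<z" "z<p+d" "P z" by blast
  then show "\<exists>j. 0<j \<and> j<d \<and> P (p+j)" by (intro exI[of _ "z-p"]) auto
next
  assume "\<exists>j. 0<j \<and> j<d \<and> P (p+j)"
  then obtain j where "0<j" "j<d" "P (p+j)" by blast
  then show "\<exists>z. p<z \<and> z<p+d \<and> P z" by (intro exI[of _ "p+j"]) auto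
qed

lemma betw:
  assumes l: "loc u p v p'" and r: "samerel p q p' q'" and n: "no3 u" "no3 v"
    and q: "q < length u" "q' < length v"
  shows "(\<exists>z. p<z \<and> z<q \<and> z<length u \<and> u!z = c) \<longleftrightarrow> (\<exists>z. p'<z \<and> z<q' \<and> z<length v \<and> v!z=c)"
proof (cases "p < q \<and> q \<le> p + 3")
  case True
  define d where "d = q - p"
  have d: "q = p + d" "d \<le> 3" using True unfolding d_def by auto
  with r have d': "q' = p' + d" unfolding samerel_def by auto
  have "(\<exists>z. p<z \<and> z<q \<and> z<length u \<and> u!z = c) \<longleftrightarrow> (\<exists>j. 0<j \<and> j<d \<and> p+j<length u \<and> u!(p+j) = c)"
    using d betw_shift[of p d "\<lambda>z. z<length u \<and> u!z = c"] by simp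
  also have "\<dots> \<longleftrightarrow> (\<exists>j. 0<j \<and> j<d \<and> p'+j<length v \<and> v!(p'+j) = c)"
  proof -
    have "\<And>j. j < d \<Longrightarrow> (p+j<length u \<longleftrightarrow> p'+j<length v) \<and> (p+j < length u \<longrightarrow> u!(p+j) = v!(p'+j))"
    proof -
      fix j assume "j < d" then have "j \<le> 3" using d by auto
      then show "(p+j<length u \<longleftrightarrow> p'+j<length v) \<and> (p+j < length u \<longrightarrow> u!(p+j) = v!(p'+j))"
        using l unfolding loc_def by blast
    qed
    then show ?thesis by metis
  qed
  also have "\<dots> \<longleftrightarrow> (\<exists>z. p'<z \<and> z<q' \<and> z<length v \<and> v!z=c)"
    using d' betw_shift[of p' d "\<lambda>z. z<length v \<and> v!z = c"] by simp
  finally show ?thesis .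
next
  case False
  show ?thesis
  proof (cases "p < q")
    case True
    with False have "p + 3 < q" by auto
    have "p' < q'" using r True unfolding samerel_def by auto
    have "p' + 3 < q'"
    proof (rule ccontr)
      assume "\<not> p' + 3 < q'"
      define d where "d = q' - p'"
      have "q' = p' + d" "d \<le> 3" using \<open>p'<q'\<close> \<open>\<not> p' + 3 < q'\<close> unfolding d_def by auto
      with r have "q = p + d" unfolding samerel_def by auto
      with \<open>p+3<q\<close> \<open>d\<le>3\<close> show False by auto
    qed
    have L: "\<exists>z. p<z \<and> z<q \<and> z<length u \<and> u!z = c"
    proof -
      have "p+1+2 < length u" using \<open>p+3<q\<close> q(1) by simp
      then obtain j where "p+1 \<le> j" "j \<le> p+1+2" "u!j = c" using n(1) unfolding no3_def by blast
      then show ?thesis using \<open>p+3<q\<close> q(1) by (intro exI[of _ j]) auto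
    qed
    have R: "\<exists>z. p'<z \<and> z<q' \<and> z<length v \<and> v!z = c"
    proof -
      have "p'+1+2 < length v" using \<open>p'+3<q'\<close> q(2) by simp
      then obtain j where "p'+1 \<le> j" "j \<le> p'+1+2" "v!j = c" using n(2) unfolding no3_def by blast
      then show ?thesis using \<open>p'+3<q'\<close> q(2) by (intro exI[of _ j]) auto
    qed
    show ?thesis using L R by simp
  next
    case False
    then have "\<not> p' < q'" using r unfolding samerel_def by auto
    with False show ?thesis by auto
  qed
qed

lemma eqvS_loc: "eqv (Suc k) u p v p' \<Longrightarrow> loc u p v p'" by simp
lemma eqvS_R: "eqv (Suc k) u p v p' \<Longrightarrow> d \<le> 3 \<Longrightarrow> p + d < length u \<Longrightarrow> eqv k u (p+d) v (p'+d)"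
  by simp
lemma eqvS_L: "eqv (Suc k) u p v p' \<Longrightarrow> d \<le> 3 \<Longrightarrow> d \<le> p \<Longrightarrow> eqv k u (p-d) v (p'-d)"
  by simp
lemma eqvS_FL1: "eqv (Suc k) u p v p' \<Longrightarrow> q < length u \<Longrightarrow> q + 3 < p \<Longrightarrow> \<exists>q'<length v. q' + 3 < p' \<and> eqv k u q v q'"
  by simp
lemma eqvS_FL2: "eqv (Suc k) u p v p' \<Longrightarrow> q' < length v \<Longrightarrow> q' + 3 < p' \<Longrightarrow> \<exists>q<length u. q + 3 < p \<and> eqv k u q v q'"
  by simp
lemma eqvS_FR1: "eqv (Suc k) u p v p' \<Longrightarrow> q < length u \<Longrightarrow> p + 3 < q \<Longrightarrow> \<exists>q'<length v. p' + 3 < q' \<and> eqv k u q v q'"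
  by simp
lemma eqvS_FR2: "eqv (Suc k) u p v p' \<Longrightarrow> q' < length v \<Longrightarrow> p' + 3 < q' \<Longrightarrow> \<exists>q<length u. p + 3 < q \<and> eqv k u q v q'"
  by simp

declare eqv.simps(2)[simp del]

lemma eqv_down: "eqv (Suc k) u p v p' \<Longrightarrow> p < length u \<Longrightarrow> eqv k u p v p'"
  using eqvS_R[of k u p v p' 0] by simp
lemma witness1:
  assumes e: "eqv (Suc k) u p v p'" and p: "p < length u" and i: "i < length u"
  shows "\<exists>i'<length v. eqv k u i v i' \<and> samerel i p i' p'"
proof -
  have l: "loc u p v p'" using eqvS_loc[OF e] .
  consider "p \<le> i" "i \<le> p + 3" | "i < p" "p \<le> i + 3" | "i + 3 < p" | "p + 3 < i" by linarith
  then show ?thesis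
  proof cases
    case 1
    define d where "d = i - p"
    have d: "i = p + d" "d \<le> 3" using 1 unfolding d_def by auto
    have "p' + d < length v" using l d i unfolding loc_def by auto
    moreover have "eqv k u i v (p'+d)" using eqvS_R[OF e d(2)] d i by simp
    moreover have "samerel i p (p'+d) p'" using d unfolding samerel_def by auto
    ultimately show ?thesis by blast
  next
    case 2
    define d where "d = p - i"
    have d: "i = p - d" "d \<le> 3" "d \<le> p" using 2 unfolding d_def by auto
    have "d \<le> p'" using l d unfolding loc_def by auto
    have "p' < length v" using l p unfolding loc_def by (metis add_0_right le0)
    then have "p' - d < length v" by auto
    moreover have "eqv k u i v (p'-d)" using eqvS_L[OF e d(2) d(3)] d by simp
    moreover have "samerel i p (p'-d) p'" using d \<open>d \<le> p'\<close> unfolding samerel_def by auto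
    ultimately show ?thesis by blast
  next
    case 3
    then obtain i' where "i' < length v" "i' + 3 < p'" "eqv k u i v i'" using eqvS_FL1[OF e i] by blast
    moreover have "samerel i p i' p'" using 3 \<open>i' + 3 < p'\<close> unfolding samerel_def by auto
    ultimately show ?thesis by blast
  next
    case 4
    then obtain i' where "i' < length v" "p' + 3 < i'" "eqv k u i v i'" using eqvS_FR1[OF e i] by blast
    moreover have "samerel i p i' p'" using 4 \<open>p' + 3 < i'\<close> unfolding samerel_def by auto
    ultimately show ?thesis by blast
  qed
qed

lemma witness2:
  assumes e: "eqv (Suc k) u p v p'" and p: "p < length u" and i: "i' < length v"
  shows "\<exists>i<length u. eqv k u i v i' \<and> samerel i p i' p'"
proof -
  have l: "loc u p v p'" using eqvS_loc[OF e] .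
  have p': "p' < length v" using l p unfolding loc_def by (metis add_0_right le0)
  consider "p' \<le> i'" "i' \<le> p' + 3" | "i' < p'" "p' \<le> i' + 3" | "i' + 3 < p'" | "p' + 3 < i'" by linarith
  then show ?thesis
  proof cases
    case 1
    define d where "d = i' - p'"
    have d: "i' = p' + d" "d \<le> 3" using 1 unfolding d_def by auto
    have "p + d < length u" using l d i unfolding loc_def by auto
    moreover have "eqv k u (p+d) v i'" using eqvS_R[OF e d(2) \<open>p + d < length u\<close>] d by simp
    moreover have "samerel (p+d) p i' p'" using d unfolding samerel_def by auto
    ultimately show ?thesis by blast
  next
    case 2
    define d where "d = p' - i'"
    have d: "i' = p' - d" "d \<le> 3" "d \<le> p'" using 2 unfolding d_def by auto
    have "d \<le> p" using l d unfolding loc_def by auto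
    then have "p - d < length u" using p by auto
    moreover have "eqv k u (p-d) v i'" using eqvS_L[OF e d(2) \<open>d \<le> p\<close>] d by simp
    moreover have "samerel (p-d) p i' p'" using d \<open>d \<le> p\<close> unfolding samerel_def by auto
    ultimately show ?thesis by blast
  next
    case 3
    then obtain i where "i < length u" "i + 3 < p" "eqv k u i v i'" using eqvS_FL2[OF e i] by blast
    moreover have "samerel i p i' p'" using 3 \<open>i + 3 < p\<close> unfolding samerel_def by auto
    ultimately show ?thesis by blast
  next
    case 4
    then obtain i where "i < length u" "p + 3 < i" "eqv k u i v i'" using eqvS_FR2[OF e i] by blast
    moreover have "samerel i p i' p'" using 4 \<open>p + 3 < i\<close> unfolding samerel_def by auto
    ultimately show ?thesis by blast
  qed
qed

definition other :: "var2 \<Rightarrow> var2" where "other x = (if x = X then Y else X)"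

lemma var2_cases: "z = x \<or> z = other x"
  unfolding other_def by (cases z; cases x) auto

lemma other_neq: "other x \<noteq> x"
  unfolding other_def by (cases x) auto

lemma game:
  "fdepth \<phi> \<le> k \<Longrightarrow> no3 u \<Longrightarrow> no3 v \<Longrightarrow> (\<forall>x. s x < length u) \<Longrightarrow> (\<forall>x. s' x < length v)
   \<Longrightarrow> (\<forall>x. eqv k u (s x) v (s' x)) \<Longrightarrow> (\<forall>x y. samerel (s x) (s y) (s' x) (s' y))
   \<Longrightarrow> fo2_sat u s \<phi> = fo2_sat v s' \<phi>"
proof (induction \<phi> arbitrary: k s s')
  case (F2Lt x y)
  then have "samerel (s x) (s y) (s' x) (s' y)" by blast
  then show ?case unfolding samerel_def by simp
next
  case (F2Eq x y)
  then have "samerel (s x) (s y) (s' x) (s' y)" by blast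
  then have "(s y = s x + 0) = (s' y = s' x + 0)" unfolding samerel_def by blast
  then show ?case by auto
next
  case (F2Let c x)
  then have "loc u (s x) v (s' x)" using eqv_loc by blast
  then have "\<forall>d\<le>(3::nat). s x + d < length u \<longrightarrow> u!(s x + d) = v!(s' x + d)" unfolding loc_def by blast
  then have "u!(s x + 0) = v!(s' x + 0)" using F2Let.prems(4) by (auto dest: spec[of _ 0])
  then show ?case using F2Let by simp
next
  case (F2Between c x y)
  have "loc u (s x) v (s' x)" using F2Between eqv_loc by blast
  moreover have "samerel (s x) (s y) (s' x) (s' y)" using F2Between by blast
  ultimately show ?case using betw[of u "s x" v "s' x" "s y" "s' y" c] F2Between.prems by simp
next
  case (F2Not \<phi>)
  then show ?case by simp
next
  case (F2And \<phi>1 \<phi>2)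
  then show ?case by (metis fo2_sat.simps(6) fdepth.simps(2) max.bounded_iff)
next
  case (F2Ex x \<phi>)
  then obtain k' where k: "k = Suc k'" "fdepth \<phi> \<le> k'" by (cases k) auto
  define y where "y = other x"
  have ey: "eqv (Suc k') u (s y) v (s' y)" using F2Ex k by simp
  have sy: "s y < length u" using F2Ex by simp
  have good: "(\<forall>z. eqv k' u ((s(x:=i)) z) v ((s'(x:=i')) z)) \<and>
     (\<forall>z w. samerel ((s(x:=i)) z) ((s(x:=i)) w) ((s'(x:=i')) z) ((s'(x:=i')) w))"
    if "eqv k' u i v i'" "samerel i (s y) i' (s' y)" for i i'
  proof
    show "\<forall>z. eqv k' u ((s(x:=i)) z) v ((s'(x:=i')) z)"
    proof
      fix z show "eqv k' u ((s(x:=i)) z) v ((s'(x:=i')) z)"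
        using var2_cases[of z x] that eqv_down[OF ey sy] other_neq[of x] unfolding y_def by auto
    qed
    show "\<forall>z w. samerel ((s(x:=i)) z) ((s(x:=i)) w) ((s'(x:=i')) z) ((s'(x:=i')) w)"
    proof (intro allI)
      fix z w
      show "samerel ((s(x:=i)) z) ((s(x:=i)) w) ((s'(x:=i')) z) ((s'(x:=i')) w)"
        using var2_cases[of z x] var2_cases[of w x] that other_neq[of x] samerel_refl samerel_sym
        unfolding y_def by (cases "z = x"; cases "w = x") auto
    qed
  qed
  show ?case
  proof
    assume "fo2_sat u s (F2Ex x \<phi>)"
    then obtain i where i: "i < length u" "fo2_sat u (s(x:=i)) \<phi>" by auto
    obtain i' where i': "i' < length v" "eqv k' u i v i'" "samerel i (s y) i' (s' y)"
      using witness1[OF ey sy i(1)] by blast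
    have r1: "\<forall>z. (s(x:=i)) z < length u" using i(1) F2Ex.prems(4) by simp
    have r2: "\<forall>z. (s'(x:=i')) z < length v" using i'(1) F2Ex.prems(5) by simp
    have "fo2_sat v (s'(x:=i')) \<phi>"
      using F2Ex.IH[OF k(2) F2Ex.prems(2,3) r1 r2] good[OF i'(2,3)] i(2) by blast
    then show "fo2_sat v s' (F2Ex x \<phi>)" using i' by auto
  next
    assume "fo2_sat v s' (F2Ex x \<phi>)"
    then obtain i' where i': "i' < length v" "fo2_sat v (s'(x:=i')) \<phi>" by auto
    obtain i where i: "i < length u" "eqv k' u i v i'" "samerel i (s y) i' (s' y)"
      using witness2[OF ey sy i'(1)] by blast
    have r1: "\<forall>z. (s(x:=i)) z < length u" using i(1) F2Ex.prems(4) by simp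
    have r2: "\<forall>z. (s'(x:=i')) z < length v" using i'(1) F2Ex.prems(5) by simp
    have "fo2_sat u (s(x:=i)) \<phi>"
      using F2Ex.IH[OF k(2) F2Ex.prems(2,3) r1 r2] good[OF i(2,3)] i'(2) by blast
    then show "fo2_sat u s (F2Ex x \<phi>)" using i by auto
  qed
qed

lemma sentence_equiv:
  assumes "fdepth \<phi> \<le> k" "no3 u" "no3 v" "u \<noteq> []" "v \<noteq> []" "eqv k u 0 v 0"
  shows "fo2_sat u (\<lambda>_. 0) \<phi> = fo2_sat v (\<lambda>_. 0) \<phi>"
  using game[of \<phi> k u v "\<lambda>_. 0" "\<lambda>_. 0"] assms samerel_refl by auto


definition win :: "nat \<Rightarrow> word \<Rightarrow> nat \<Rightarrow> word \<Rightarrow> nat \<Rightarrow> bool" where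
  "win r w1 p w2 p' \<longleftrightarrow> (\<forall>d\<le>r. w1!(p+d) = w2!(p'+d) \<and> w1!(p-d) = w2!(p'-d))"

lemma winD: "win r w1 p w2 p' \<Longrightarrow> d \<le> r \<Longrightarrow> w1!(p+d) = w2!(p'+d) \<and> w1!(p-d) = w2!(p'-d)"
  unfolding win_def by blast

lemma win_R: assumes w: "win r w1 p w2 p'" and rd: "r' + d \<le> r" shows "win r' w1 (p+d) w2 (p'+d)"
  unfolding win_def
proof (intro allI impI conjI)
  fix d2 assume d2: "d2 \<le> r'"
  have "w1!(p+(d+d2)) = w2!(p'+(d+d2))" using winD[OF w, of "d+d2"] d2 rd by linarith
  then show "w1!(p+d+d2) = w2!(p'+d+d2)" by (simp add: add.assoc)
  show "w1!(p+d-d2) = w2!(p'+d-d2)"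
  proof (cases "d2 \<le> d")
    case True
    have "w1!(p+(d-d2)) = w2!(p'+(d-d2))" using winD[OF w, of "d-d2"] d2 rd by linarith
    then show ?thesis using True by simp
  next
    case False
    have "w1!(p-(d2-d)) = w2!(p'-(d2-d))" using winD[OF w, of "d2-d"] d2 rd by linarith
    moreover have "p+d-d2 = p-(d2-d)" "p'+d-d2 = p'-(d2-d)" using False by auto
    ultimately show ?thesis by (simp only:)
  qed
qed

lemma win_L: assumes w: "win r w1 p w2 p'" and rd: "r' + d \<le> r" and dp: "d \<le> p" "d \<le> p'"
  shows "win r' w1 (p-d) w2 (p'-d)"
  unfolding win_def
proof (intro allI impI conjI)
  fix d2 assume d2: "d2 \<le> r'"
  have "w1!(p-(d+d2)) = w2!(p'-(d+d2))" using winD[OF w, of "d+d2"] d2 rd by linarith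
  then show "w1!(p-d-d2) = w2!(p'-d-d2)" by (simp add: diff_diff_add)
  show "w1!(p-d+d2) = w2!(p'-d+d2)"
  proof (cases "d \<le> d2")
    case True
    have "w1!(p+(d2-d)) = w2!(p'+(d2-d))" using winD[OF w, of "d2-d"] d2 rd by linarith
    moreover have "p-d+d2 = p+(d2-d)" "p'-d+d2 = p'+(d2-d)" using True dp by auto
    ultimately show ?thesis by (simp only:)
  next
    case False
    have "w1!(p-(d-d2)) = w2!(p'-(d-d2))" using winD[OF w, of "d-d2"] d2 rd by linarith
    moreover have "p-d+d2 = p-(d-d2)" "p'-d+d2 = p'-(d-d2)" using False dp by auto
    ultimately show ?thesis by (simp only:)
  qed
qed

lemma win_trans: "win r a p b q \<Longrightarrow> win r b q c s \<Longrightarrow> win r a p c s"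
  unfolding win_def by auto

lemma win_sym: "win r a p b q \<Longrightarrow> win r b q a p"
  unfolding win_def by auto

lemma win_loc: assumes "win r u p v p'" "3 \<le> r" "r \<le> p" "r \<le> p'" "p + r < length u" "p' + r < length v"
  shows "loc u p v p'"
  unfolding loc_def
proof (intro allI impI conjI)
  fix d :: nat assume d: "d \<le> 3"
  show "p + d < length u \<longleftrightarrow> p' + d < length v" using assms d by linarith
  show "u!(p+d) = v!(p'+d)" using winD[OF assms(1), of d] d assms(2) by linarith
  show "d \<le> p \<longleftrightarrow> d \<le> p'" using assms d by linarith
  show "u!(p-d) = v!(p'-d)" using winD[OF assms(1), of d] d assms(2) by linarith
qed

locale zone =
  fixes u v :: word and e C Q K :: nat
  assumes lenv: "length v = length u + e"
  and pre: "\<And>i. i<C \<Longrightarrow> u!i = v!i"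
  and suf: "\<And>i. length u \<le> i + C \<Longrightarrow> i < length u \<Longrightarrow> u!i = v!(i+e)"
  and szC: "Suc K * Q + 3*K + 10 \<le> C"
  and szL: "2*C \<le> length u"
  and szQ: "3*K + 8 \<le> Q"
begin

definition Z :: "nat \<Rightarrow> nat" where "Z k = Suc k * Q"
definition rho :: "nat \<Rightarrow> nat" where "rho k = 3*k+3"

definition SIM :: "nat \<Rightarrow> nat \<Rightarrow> nat \<Rightarrow> bool" where
  "SIM k p p' \<longleftrightarrow> (p < Z k \<and> p' = p) \<or> (length u \<le> p + Z k \<and> p' = p + e)
     \<or> (Z k \<le> p \<and> p + Z k < length u \<and> Z k \<le> p' \<and> p' + Z k < length v \<and> win (rho k) u p v p')"

lemma Z_Suc: "Z (Suc k) = Z k + Q" unfolding Z_def by simp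
lemma Z_mono: "k \<le> K \<Longrightarrow> Z k \<le> Z K" unfolding Z_def by simp
lemma rho_le: "k \<le> K \<Longrightarrow> rho k \<le> 3*K+3" unfolding rho_def by simp
lemma ZK: "Z K + 3*K + 10 \<le> C" using szC unfolding Z_def by simp
lemma Zk: "k \<le> K \<Longrightarrow> Z k + rho k + 7 \<le> C" using ZK Z_mono[of k] rho_le[of k] by linarith
lemma ZQ: "Q \<le> Z k" unfolding Z_def by simp
lemma rhoQ: "k \<le> K \<Longrightarrow> rho k + 5 \<le> Q" using szQ rho_le by fastforce

lemma pre_win: "q + r < C \<Longrightarrow> win r u q v q"
  unfolding win_def using pre by auto

lemma suf_win: assumes "length u + r \<le> q + C" "q + r < length u" "r \<le> q" shows "win r u q v (q+e)"
  unfolding win_def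
proof (intro allI impI conjI)
  fix d assume "d \<le> r"
  then show "u!(q+d) = v!(q+e+d)" using suf[of "q+d"] assms by (simp add: add.commute add.left_commute)
  have "u!(q-d) = v!(q-d+e)" using suf[of "q-d"] assms \<open>d\<le>r\<close> by simp
  then show "u!(q-d) = v!(q+e-d)" using \<open>d\<le>r\<close> assms by simp
qed

lemma SIM_loc: assumes "k \<le> K" "SIM k p p'" "p < length u" "p' < length v" shows "loc u p v p'"
proof -
  have Zk: "Z k + rho k + 7 \<le> C" using Zk[OF assms(1)] .
  have L: "2*C \<le> length u" using szL .
  have r3: "3 \<le> rho k" unfolding rho_def by simp
  have rQ: "rho k + 5 \<le> Q" using rhoQ[OF assms(1)] .
  have ZQ: "Q \<le> Z k" using ZQ .
  consider "p < Z k" "p' = p" | "length u \<le> p + Z k" "p' = p + e"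
    | "Z k \<le> p" "p + Z k < length u" "Z k \<le> p'" "p' + Z k < length v" "win (rho k) u p v p'"
    using assms(2) unfolding SIM_def by blast
  then show ?thesis
  proof cases
    case 1
    show ?thesis unfolding loc_def
    proof (intro allI impI conjI)
      fix d :: nat assume d: "d \<le> 3"
      show "p + d < length u \<longleftrightarrow> p' + d < length v" using 1 d Zk L lenv by linarith
      show "u!(p+d) = v!(p'+d)" using 1 d Zk pre[of "p+d"] by simp
      show "d \<le> p \<longleftrightarrow> d \<le> p'" using 1 by simp
      show "u!(p-d) = v!(p'-d)" using 1 d Zk pre[of "p-d"] by simp
    qed
  next
    case 2
    have a: "d \<le> 3 \<Longrightarrow> p + d < length u \<Longrightarrow> u!(p+d) = v!(p'+d)" for d
      using suf[of "p+d"] 2 Zk by (simp add: add.commute add.left_commute)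
    have p10: "10 \<le> p" using 2 Zk L by linarith
    have b: "d \<le> 3 \<Longrightarrow> u!(p-d) = v!(p'-d)" for d
    proof -
      assume "d \<le> 3"
      then have "u!(p-d) = v!(p - d + e)" using suf[of "p-d"] 2 Zk assms(3) by simp
      moreover have "p - d + e = p' - d" using 2 p10 \<open>d \<le> 3\<close> by simp
      ultimately show ?thesis by simp
    qed
    show ?thesis unfolding loc_def
    proof (intro allI impI conjI)
      fix d :: nat assume d: "d \<le> 3"
      show "p + d < length u \<longleftrightarrow> p' + d < length v" using 2 lenv by linarith
      show "p + d < length u \<Longrightarrow> u!(p+d) = v!(p'+d)" using a d by blast
      show "d \<le> p \<longleftrightarrow> d \<le> p'" using 2 p10 d by linarith
      show "u!(p-d) = v!(p'-d)" using b d by blast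
    qed
  next
    case 3
    then show ?thesis using win_loc[of "rho k" u p v p'] r3 rQ ZQ by auto
  qed
qed

end

locale zone2 = zone +
  assumes covPu: "\<And>k q. k < K \<Longrightarrow> Z k \<le> q \<Longrightarrow> q + Z k < length u \<Longrightarrow> \<exists>r. Z k \<le> r \<and> r + 4 \<le> Z (Suc k) \<and> win (rho k) u q u r"
  and covPv: "\<And>k q. k < K \<Longrightarrow> Z k \<le> q \<Longrightarrow> q + Z k < length v \<Longrightarrow> \<exists>r. Z k \<le> r \<and> r + 4 \<le> Z (Suc k) \<and> win (rho k) v q u r"
  and covSu: "\<And>k q. k < K \<Longrightarrow> Z k \<le> q \<Longrightarrow> q + Z k < length u \<Longrightarrow> \<exists>r. length u + 4 \<le> r + Z (Suc k) \<and> r + Z k < length u \<and> win (rho k) u q u r"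
  and covSv: "\<And>k q. k < K \<Longrightarrow> Z k \<le> q \<Longrightarrow> q + Z k < length v \<Longrightarrow> \<exists>r. length u + 4 \<le> r + Z (Suc k) \<and> r + Z k < length u \<and> win (rho k) v q u r"
begin

lemma nums: assumes "k < K"
  shows "Z (Suc k) = Z k + Q" "Z (Suc k) + rho (Suc k) + 7 \<le> C" "rho (Suc k) = rho k + 3"
    "2*C \<le> length u" "rho (Suc k) + 5 \<le> Q" "length v = length u + e" "Q \<le> Z k" "3 \<le> rho k"
  using Z_Suc Zk[of "Suc k"] assms szL rhoQ[of "Suc k"] lenv ZQ unfolding rho_def by auto

lemma SIM_cases:
  assumes "SIM k p p'"
  obtains (A) "p < Z k" "p' = p" | (B) "length u \<le> p + Z k" "p' = p + e"
    | (M) "Z k \<le> p" "p + Z k < length u" "Z k \<le> p'" "p' + Z k < length v" "win (rho k) u p v p'"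
  using assms unfolding SIM_def by blast

lemma SIM_pre: assumes "k < K" "q < Z (Suc k) + 3" shows "SIM k q q"
proof -
  note n = nums[OF assms(1)]
  show ?thesis
  proof (cases "q < Z k")
    case True then show ?thesis unfolding SIM_def by simp
  next
    case False
    have "win (rho k) u q v q" using pre_win[of q "rho k"] n assms by simp
    then show ?thesis unfolding SIM_def using False n assms by simp
  qed
qed

lemma SIM_suf: assumes "k < K" "length u \<le> q + Z (Suc k) + 3" "q < length u" shows "SIM k q (q+e)"
proof -
  note n = nums[OF assms(1)]
  show ?thesis
  proof (cases "length u \<le> q + Z k")
    case True then show ?thesis unfolding SIM_def by simp
  next
    case False
    have "win (rho k) u q v (q+e)" using suf_win[of "rho k" q] n assms False by simp
    then show ?thesis unfolding SIM_def using False n assms by simp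
  qed
qed

context
  fixes k p p'
  assumes kK: "k < K" and S: "SIM (Suc k) p p'" and pu: "p < length u" and pv: "p' < length v"
begin

lemma nearR: assumes d: "d \<le> 3" "p + d < length u" shows "p' + d < length v \<and> SIM k (p+d) (p'+d)"
proof -
  note n = nums[OF kK]
  from S show ?thesis
  proof (cases rule: SIM_cases)
    case A
    then show ?thesis using SIM_pre[OF kK, of "p+d"] d n by simp
  next
    case B
    have "length u \<le> p + d + Z (Suc k) + 3" using B n by simp
    then have "SIM k (p+d) (p+d+e)" using SIM_suf[OF kK, of "p+d"] d by simp
    moreover have "p' + d = p + d + e" using B by simp
    ultimately have "SIM k (p+d) (p'+d)" by (simp add: ac_simps)
    moreover have "p' + d < length v" using B d n by simp
    ultimately show ?thesis by blast
  next
    case M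
    have "win (rho k) u (p+d) v (p'+d)" using win_R[OF M(5), of "rho k" d] n d by simp
    then show ?thesis unfolding SIM_def using M n d by simp
  qed
qed

lemma nearL: assumes d: "d \<le> 3" "d \<le> p" shows "d \<le> p' \<and> SIM k (p-d) (p'-d)"
proof -
  note n = nums[OF kK]
  from S show ?thesis
  proof (cases rule: SIM_cases)
    case A
    then show ?thesis using SIM_pre[OF kK, of "p-d"] d n by simp
  next
    case B
    have "p - d + e = p' - d" using B d by simp
    moreover have "length u \<le> p - d + Z (Suc k) + 3" using B n d by simp
    then have "SIM k (p-d) (p-d+e)" using SIM_suf[OF kK, of "p-d"] pu by simp
    ultimately show ?thesis using d B by simp
  next
    case M
    have "win (rho k) u (p-d) v (p'-d)" using win_L[OF M(5), of "rho k" d] n d M by simp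
    moreover have "Z k \<le> p - d" "p - d + Z k < length u" "Z k \<le> p' - d" "p' - d + Z k < length v" "d \<le> p'"
      using M n d by auto
    ultimately show ?thesis unfolding SIM_def by blast
  qed
qed

lemma farL1: assumes q: "q < length u" "q + 3 < p" shows "\<exists>q'<length v. q' + 3 < p' \<and> SIM k q q'"
proof -
  note n = nums[OF kK]
  show ?thesis
  proof (cases "p < Z (Suc k) \<and> p' = p")
    case True
    then show ?thesis using SIM_pre[OF kK, of q] q n by (intro exI[of _ q]) simp
  next
    case False
    then have pb: "Z (Suc k) \<le> p" "Z (Suc k) \<le> p'" using S n pu unfolding SIM_def by auto
    show ?thesis
    proof (cases "q < Z k")
      case True
      then show ?thesis using pb n unfolding SIM_def by (intro exI[of _ q]) simp
    next
      case F1: False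
      show ?thesis
      proof (cases "length u \<le> q + Z k")
        case True
        then have "\<not> (Z (Suc k) \<le> p \<and> p + Z (Suc k) < length u)" using q n by simp
        then have "p' = p + e" using S False unfolding SIM_def by auto
        then show ?thesis using True q n unfolding SIM_def by (intro exI[of _ "q+e"]) simp
      next
        case False
        obtain r where r: "Z k \<le> r" "r + 4 \<le> Z (Suc k)" "win (rho k) u q u r"
          using covPu[OF kK, of q] F1 False q by auto
        have "win (rho k) u q v r" using win_trans[OF r(3) pre_win[of r "rho k"]] r n by simp
        then show ?thesis using r F1 False q n pb unfolding SIM_def by (intro exI[of _ r]) simp
      qed
    qed
  qed
qed

lemma farL2: assumes q: "q' < length v" "q' + 3 < p'" shows "\<exists>q<length u. q + 3 < p \<and> SIM k q q'"
proof -
  note n = nums[OF kK]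
  show ?thesis
  proof (cases "p < Z (Suc k) \<and> p' = p")
    case True
    then show ?thesis using SIM_pre[OF kK, of q'] q n by (intro exI[of _ q']) simp
  next
    case False
    then have pb: "Z (Suc k) \<le> p" "Z (Suc k) \<le> p'" using S n pu unfolding SIM_def by auto
    show ?thesis
    proof (cases "q' < Z k")
      case True
      then show ?thesis using pb n unfolding SIM_def by (intro exI[of _ q']) simp
    next
      case F1: False
      show ?thesis
      proof (cases "length v \<le> q' + Z k")
        case True
        then have "\<not> (Z (Suc k) \<le> p' \<and> p' + Z (Suc k) < length v)" using q n by simp
        then have pe: "p' = p + e" using S False unfolding SIM_def by auto
        have "q' - e + 3 < p" "q' = q' - e + e" using pe q True n by auto
        then show ?thesis using True q n unfolding SIM_def by (intro exI[of _ "q'-e"]) auto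
      next
        case False
        obtain r where r: "Z k \<le> r" "r + 4 \<le> Z (Suc k)" "win (rho k) v q' u r"
          using covPv[OF kK, of q'] F1 False q by auto
        have "win (rho k) u r v q'" using win_sym[OF r(3)] .
        then show ?thesis using r F1 False q n pb unfolding SIM_def by (intro exI[of _ r]) simp
      qed
    qed
  qed
qed

lemma farR1: assumes q: "q < length u" "p + 3 < q" shows "\<exists>q'<length v. p' + 3 < q' \<and> SIM k q q'"
proof -
  note n = nums[OF kK]
  from S show ?thesis
  proof (cases rule: SIM_cases)
    case B
    then show ?thesis using SIM_suf[OF kK, of q] q n by (intro exI[of _ "q+e"]) simp
  next
    case A
    show ?thesis
    proof (cases "q < Z k")
      case True then show ?thesis using A q n unfolding SIM_def by (intro exI[of _ q]) simp
    next
      case F1: False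
      show ?thesis
      proof (cases "length u \<le> q + Z k")
        case True then show ?thesis using A q n unfolding SIM_def by (intro exI[of _ "q+e"]) simp
      next
        case False
        obtain r where r: "length u + 4 \<le> r + Z (Suc k)" "r + Z k < length u" "win (rho k) u q u r"
          using covSu[OF kK, of q] F1 False q by auto
        have "win (rho k) u q v (r+e)" using win_trans[OF r(3) suf_win[of "rho k" r]] r n by simp
        then show ?thesis using r F1 False q n A unfolding SIM_def by (intro exI[of _ "r+e"]) simp
      qed
    qed
  next
    case M
    show ?thesis
    proof (cases "length u \<le> q + Z k")
      case True then show ?thesis using M q n unfolding SIM_def by (intro exI[of _ "q+e"]) simp
    next
      case False
      have F1: "Z k \<le> q" using M q n by simp
      obtain r where r: "length u + 4 \<le> r + Z (Suc k)" "r + Z k < length u" "win (rho k) u q u r"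
        using covSu[OF kK, of q] F1 False q by auto
      have "win (rho k) u q v (r+e)" using win_trans[OF r(3) suf_win[of "rho k" r]] r n by simp
      then show ?thesis using r F1 False q n M unfolding SIM_def by (intro exI[of _ "r+e"]) simp
    qed
  qed
qed

lemma farR2: assumes q: "q' < length v" "p' + 3 < q'" shows "\<exists>q<length u. p + 3 < q \<and> SIM k q q'"
proof -
  note n = nums[OF kK]
  from S show ?thesis
  proof (cases rule: SIM_cases)
    case B
    have "q' = q' - e + e" "p + 3 < q' - e" using B q by auto
    then show ?thesis using SIM_suf[OF kK, of "q'-e"] q n B by (intro exI[of _ "q'-e"]) simp
  next
    case A
    show ?thesis
    proof (cases "q' < Z k")
      case True then show ?thesis using A q n unfolding SIM_def by (intro exI[of _ q']) simp
    next
      case F1: False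
      show ?thesis
      proof (cases "length v \<le> q' + Z k")
        case True
        have "q' = q' - e + e" "length u \<le> q' - e + Z k" "p + 3 < q' - e" "q' - e < length u"
          using True n A q by auto
        then show ?thesis unfolding SIM_def by (intro exI[of _ "q'-e"]) simp
      next
        case False
        obtain r where r: "length u + 4 \<le> r + Z (Suc k)" "r + Z k < length u" "win (rho k) v q' u r"
          using covSv[OF kK, of q'] F1 False q by auto
        have "win (rho k) u r v q'" using win_sym[OF r(3)] .
        then show ?thesis using r F1 False q n A unfolding SIM_def by (intro exI[of _ r]) simp
      qed
    qed
  next
    case M
    show ?thesis
    proof (cases "length v \<le> q' + Z k")
      case True
      have "q' = q' - e + e" "length u \<le> q' - e + Z k" "p + 3 < q' - e" "q' - e < length u"
        using True n M q by auto
      then show ?thesis unfolding SIM_def by (intro exI[of _ "q'-e"]) simp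
    next
      case False
      have F1: "Z k \<le> q'" using M q n by simp
      obtain r where r: "length u + 4 \<le> r + Z (Suc k)" "r + Z k < length u" "win (rho k) v q' u r"
        using covSv[OF kK, of q'] F1 False q by auto
      have "win (rho k) u r v q'" using win_sym[OF r(3)] .
      then show ?thesis using r F1 False q n M unfolding SIM_def by (intro exI[of _ r]) simp
    qed
  qed
qed

end

theorem SIM_eqv: "k \<le> K \<Longrightarrow> SIM k p p' \<Longrightarrow> p < length u \<Longrightarrow> p' < length v \<Longrightarrow> eqv k u p v p'"
proof (induction k arbitrary: p p')
  case 0
  then show ?case using SIM_loc[of 0 p p'] by simp
next
  case (Suc k)
  have kK: "k < K" using Suc.prems by simp
  note a = kK Suc.prems(2,3,4)
  have IH: "\<And>q q'. SIM k q q' \<Longrightarrow> q < length u \<Longrightarrow> q' < length v \<Longrightarrow> eqv k u q v q'"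
    using Suc.IH kK by simp
  show ?case unfolding eqv.simps(2)
  proof (intro conjI allI impI)
    show "loc u p v p'" using SIM_loc[OF Suc.prems] .
  next
    fix d :: nat assume "d \<le> 3" "p + d < length u"
    then show "eqv k u (p+d) v (p'+d)" using nearR[OF a, of d] IH by blast
  next
    fix d :: nat assume "d \<le> 3" "d \<le> p"
    moreover have "p - d < length u" using Suc.prems by simp
    moreover have "p' - d < length v" using Suc.prems by simp
    ultimately show "eqv k u (p-d) v (p'-d)" using nearL[OF a, of d] IH by blast
  next
    fix q assume "q < length u" "q + 3 < p"
    then show "\<exists>q'<length v. q' + 3 < p' \<and> eqv k u q v q'" using farL1[OF a, of q] IH by blast
  next
    fix q' assume "q' < length v" "q' + 3 < p'"
    then show "\<exists>q<length u. q + 3 < p \<and> eqv k u q v q'" using farL2[OF a, of q'] IH by blast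
  next
    fix q assume "q < length u" "p + 3 < q"
    then show "\<exists>q'<length v. p' + 3 < q' \<and> eqv k u q v q'" using farR1[OF a, of q] IH by blast
  next
    fix q' assume "q' < length v" "p' + 3 < q'"
    then show "\<exists>q<length u. p + 3 < q \<and> eqv k u q v q'" using farR2[OF a, of q'] IH by blast
  qed
qed

corollary eqv_start: "eqv K u 0 v 0"
proof -
  have "0 < Z K" unfolding Z_def using szQ by simp
  moreover have "0 < length u" "0 < length v" using szL szC lenv by auto
  ultimately show ?thesis using SIM_eqv[of K 0 0] unfolding SIM_def by simp
qed

end

definition Par :: "word \<Rightarrow> bool" where
  "Par w \<longleftrightarrow> (w \<noteq> [] \<longrightarrow> w!0 = A \<and> w!(length w - 1) = B \<and> even (length w))
     \<and> (\<forall>j. odd j \<longrightarrow> j+1 < length w \<longrightarrow> w!j \<noteq> w!(j+1))"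

definition blk :: "nat \<Rightarrow> word" where
  "blk n = [A] @ concat (replicate n [A, B]) @ [B]"

lemma len_cr: "length (concat (replicate n [A, B])) = 2*n"
  by (induction n) auto

lemma nth_cr: "j < 2*n \<Longrightarrow> concat (replicate n [A, B]) ! j = (if even j then A else B)"
proof (induction n arbitrary: j)
  case 0 then show ?case by simp
next
  case (Suc n)
  show ?case
  proof (cases "j < 2")
    case True
    then show ?thesis by (cases j) (auto simp: nth_append)
  next
    case False
    then have "concat (replicate (Suc n) [A, B]) ! j = concat (replicate n [A, B]) ! (j - 2)"
      by (simp add: nth_append numeral_2_eq_2)
    also have "\<dots> = (if even (j-2) then A else B)" using Suc False by simp
    finally show ?thesis using False by auto
  qed
qed

lemma len_blk: "length (blk n) = 2*n+2"
  unfolding blk_def by (simp add: len_cr)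

lemma nth_blk: "j < 2*n+2 \<Longrightarrow> blk n ! j = (if j = 0 then A else if j = 2*n+1 then B else if odd j then A else B)"
  unfolding blk_def
  by (auto simp: nth_append nth_Cons' len_cr nth_cr)

lemma block_lang_blk: "block_lang = range blk"
  unfolding block_lang_def blk_def by auto

lemma Par_nil: "Par []" unfolding Par_def by simp

lemma Par_app: assumes v: "Par v" shows "Par (blk n @ v)"
  unfolding Par_def
proof (intro conjI impI allI)
  let ?w = "blk n @ v"
  have lw: "length ?w = 2*n+2 + length v" by (simp add: len_blk)
  show "?w!0 = A" using nth_blk[of 0 n] by (simp add: nth_append len_blk)
  show "?w!(length ?w - 1) = B"
  proof (cases "v = []")
    case True then show ?thesis using nth_blk[of "2*n+1" n] by (simp add: len_blk)
  next
    case False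
    then have "v!(length v - 1) = B" using v unfolding Par_def by simp
    then show ?thesis using False by (simp add: nth_append len_blk)
  qed
  show "even (length ?w)"
    using v unfolding Par_def by (cases "v = []") (auto simp: len_blk)
  fix j assume j: "odd j" "j + 1 < length ?w"
  consider "j + 1 < 2*n+2" | "j + 1 = 2*n+2" | "j \<ge> 2*n+2" by linarith
  then show "?w!j \<noteq> ?w!(j+1)"
  proof cases
    case 1
    then show ?thesis using j nth_blk[of j n] nth_blk[of "j+1" n] by (auto simp: nth_append len_blk)
  next
    case 2
    then have "v \<noteq> []" using j lw by auto
    then have "v!0 = A" using v unfolding Par_def by simp
    then show ?thesis using 2 nth_blk[of j n] by (auto simp: nth_append len_blk)
  next
    case 3
    define i where "i = j - (2*n+2)"
    have "odd i" using j 3 unfolding i_def by auto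
    moreover have "i + 1 < length v" using j 3 lw unfolding i_def by auto
    ultimately have "v!i \<noteq> v!(i+1)" using v unfolding Par_def by blast
    moreover have "j = length (blk n) + i" "j+1 = length (blk n) + (i+1)" using 3 unfolding i_def
      by (auto simp: len_blk)
    then have "?w!j = v!i" "?w!(j+1) = v!(i+1)" by (metis nth_append_length_plus)+
    ultimately show ?thesis by simp
  qed
qed

lemma L_Par: "w \<in> L_lang \<Longrightarrow> Par w"
  unfolding L_lang_def
proof (induction rule: kleene_star.induct)
  case star_nil then show ?case by (rule Par_nil)
next
  case (star_app u v)
  then obtain n where "u = blk n" unfolding block_lang_blk by auto
  then show ?case using Par_app star_app by simp
qed

lemma Par_drop:
  assumes P: "Par w" and k: "even k" "0 < k" "k \<le> length w" "w!(k-1) = B"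
  shows "Par (drop k w)"
  unfolding Par_def
proof (intro conjI impI allI)
  assume ne: "drop k w \<noteq> []"
  then have kl: "k < length w" by simp
  have "odd (k-1)" using k by simp
  moreover have "k - 1 + 1 = k" using k by simp
  ultimately have "w!(k-1) \<noteq> w!k" using P kl unfolding Par_def by metis
  then have "w!k \<noteq> B" using k(4) by simp
  then have "w!k = A" by (cases "w!k") auto
  then show "drop k w ! 0 = A" using kl by simp
  have "w \<noteq> []" using kl by auto
  then have "w!(length w - 1) = B" "even (length w)" using P unfolding Par_def by auto
  then show "drop k w ! (length (drop k w) - 1) = B" using kl by (simp add: nth_drop)
  show "even (length (drop k w))" using \<open>even (length w)\<close> k by simp
next
  fix j assume j: "odd j" "j+1 < length (drop k w)"
  have "odd (k + j)" using j k by simp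
  moreover have "k + j + 1 < length w" using j by simp
  ultimately have "w!(k+j) \<noteq> w!(k+j+1)" using P unfolding Par_def by blast
  then show "drop k w ! j \<noteq> drop k w ! (j+1)" using j by (simp add: nth_drop add.assoc)
qed

lemma letter_neq: "x \<noteq> y \<Longrightarrow> y \<noteq> A \<Longrightarrow> x = A" by (cases x; cases y) auto
lemma letter_neq2: "x \<noteq> y \<Longrightarrow> y \<noteq> B \<Longrightarrow> x = B" by (cases x; cases y) auto

lemma Par_L: "Par w \<Longrightarrow> w \<in> L_lang"
proof (induction "length w" arbitrary: w rule: less_induct)
  case less
  show ?case
  proof (cases "w = []")
    case True then show ?thesis unfolding L_lang_def by (simp add: kleene_star.star_nil)
  next
    case ne: False
    have P: "w!0 = A" "w!(length w - 1) = B" "even (length w)"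
      and odd: "\<And>j. odd j \<Longrightarrow> j+1 < length w \<Longrightarrow> w!j \<noteq> w!(j+1)"
      using less.prems ne unfolding Par_def by auto
    have "0 < length w" using ne by simp
    then have n2: "2 \<le> length w" using P(3) by presburger
    define S where "S = {i. 2*i+1 < length w \<and> w!(2*i+1) = B}"
    have "(length w - 2) div 2 \<in> S"
    proof -
      have "2*((length w - 2) div 2) + 1 = length w - 1" using P(3) n2 by auto
      then show ?thesis using P n2 unfolding S_def by auto
    qed
    define i where "i = (LEAST i. i \<in> S)"
    have iS: "i \<in> S" unfolding i_def by (rule LeastI) fact
    have imin: "\<And>l. l < i \<Longrightarrow> l \<notin> S" unfolding i_def using not_less_Least by blast
    have "2*i+1 < length w" using iS unfolding S_def by simp
    then have il: "2*i+2 \<le> length w" using P(3) by presburger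
    have oddA: "\<And>l. l < i \<Longrightarrow> w!(2*l+1) = A"
    proof -
      fix l assume l: "l < i"
      then have "l \<notin> S" using imin by blast
      moreover have "2*l+1 < length w" using l il by simp
      ultimately have "w!(2*l+1) \<noteq> B" unfolding S_def by simp
      then show "w!(2*l+1) = A" by (cases "w!(2*l+1)") auto
    qed
    have evenB: "\<And>l. 0 < l \<Longrightarrow> l \<le> i \<Longrightarrow> w!(2*l) = B"
    proof -
      fix l assume l: "0 < l" "l \<le> i"
      have "odd (2*(l-1)+1)" by simp
      moreover have "2*(l-1)+1+1 < length w" using l il by auto
      ultimately have "w!(2*(l-1)+1) \<noteq> w!(2*(l-1)+1+1)" using odd by blast
      moreover have "w!(2*(l-1)+1) = A" using oddA l by simp
      moreover have "2*(l-1)+1+1 = 2*l" using l by simp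
      ultimately show "w!(2*l) = B" by (metis letter_neq2 letter.distinct(1))
    qed
    have tk: "take (2*i+2) w = blk i"
    proof (rule nth_equalityI)
      show "length (take (2*i+2) w) = length (blk i)" using il by (simp add: len_blk)
      fix j assume "j < length (take (2*i+2) w)"
      then have j: "j < 2*i+2" by simp
      show "take (2*i+2) w ! j = blk i ! j"
      proof -
        have "take (2*i+2) w ! j = w!j" using j by simp
        also have "\<dots> = (if j = 0 then A else if j = 2*i+1 then B else if odd j then A else B)"
        proof (cases "j = 0")
          case True then show ?thesis using P by simp
        next
          case F0: False
          show ?thesis
          proof (cases "j = 2*i+1")
            case True then show ?thesis using iS unfolding S_def by simp
          next
            case F1: False
            show ?thesis
            proof (cases "odd j")
              case True
              then obtain l where "j = 2*l+1" by (metis oddE)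
              then show ?thesis using oddA[of l] F1 j by auto
            next
              case False
              then obtain l where "j = 2*l" by (metis evenE)
              then show ?thesis using evenB[of l] F0 F1 j by auto
            qed
          qed
        qed
        also have "\<dots> = blk i ! j" using nth_blk[OF j] by simp
        finally show ?thesis .
      qed
    qed
    have "Par (drop (2*i+2) w)"
      using Par_drop[OF less.prems, of "2*i+2"] il iS unfolding S_def by simp
    moreover have "length (drop (2*i+2) w) < length w" using n2 by simp
    ultimately have "drop (2*i+2) w \<in> L_lang" using less.hyps[of "drop (2*i+2) w"] by blast
    moreover have "w = blk i @ drop (2*i+2) w" using tk by (metis append_take_drop_id)
    moreover have "blk i \<in> block_lang" unfolding block_lang_blk by simp
    ultimately show ?thesis unfolding L_lang_def by (metis kleene_star.star_app)
  qed
qed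

lemma L_iff_Par: "w \<in> L_lang \<longleftrightarrow> Par w"
  using L_Par Par_L by blast


definition Wf :: "nat \<Rightarrow> (nat \<Rightarrow> bool) \<Rightarrow> nat \<Rightarrow> letter" where
  "Wf h \<sigma> i = (if i mod h = 0 then (if \<sigma> (i div h) then A else B) else if odd (i mod h) then A else B)"

lemma Wf_dec: "t < h \<Longrightarrow> Wf h \<sigma> (c*h + t) = (if t = 0 then (if \<sigma> c then A else B) else if odd t then A else B)"
  unfolding Wf_def by simp

lemma Wf_win:
  assumes h: "2*r < h" and t: "t < h" and c1: "t \<le> r \<Longrightarrow> \<sigma> c = \<sigma>' c'"
    and c2: "h \<le> t + r \<Longrightarrow> \<sigma> (Suc c) = \<sigma>' (Suc c')"
    and q: "r \<le> c*h + t" "r \<le> c'*h + t" and d: "d \<le> r"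
  shows "Wf h \<sigma> (c*h+t+d) = Wf h \<sigma>' (c'*h+t+d) \<and> Wf h \<sigma> (c*h+t-d) = Wf h \<sigma>' (c'*h+t-d)"
proof
  show "Wf h \<sigma> (c*h+t+d) = Wf h \<sigma>' (c'*h+t+d)"
  proof (cases "t + d < h")
    case True
    have e1: "Wf h \<sigma> (c*h+t+d) = (if t+d = 0 then (if \<sigma> c then A else B) else if odd (t+d) then A else B)"
      by (simp only: add.assoc Wf_dec[OF True])
    have e2: "Wf h \<sigma>' (c'*h+t+d) = (if t+d = 0 then (if \<sigma>' c' then A else B) else if odd (t+d) then A else B)"
      by (simp only: add.assoc Wf_dec[OF True])
    show ?thesis using e1 e2 c1 d by auto
  next
    case False
    have lt: "t + d - h < h" using h t d by linarith
    have eq1: "c*h+t+d = Suc c*h + (t+d-h)" "c'*h+t+d = Suc c'*h + (t+d-h)" using False by simp_all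
    have e1: "Wf h \<sigma> (c*h+t+d) = (if t+d-h = 0 then (if \<sigma> (Suc c) then A else B) else if odd (t+d-h) then A else B)"
      by (simp only: eq1 Wf_dec[OF lt])
    have e2: "Wf h \<sigma>' (c'*h+t+d) = (if t+d-h = 0 then (if \<sigma>' (Suc c') then A else B) else if odd (t+d-h) then A else B)"
      by (simp only: eq1 Wf_dec[OF lt])
    have "t + d - h = 0 \<Longrightarrow> h \<le> t + r" using False d by linarith
    then show ?thesis using e1 e2 c2 by auto
  qed
next
  show "Wf h \<sigma> (c*h+t-d) = Wf h \<sigma>' (c'*h+t-d)"
  proof (cases "d \<le> t")
    case True
    have lt: "t - d < h" using t by simp
    have eq1: "c*h+t-d = c*h + (t-d)" "c'*h+t-d = c'*h + (t-d)" using True by simp_all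
    have e1: "Wf h \<sigma> (c*h+t-d) = (if t-d = 0 then (if \<sigma> c then A else B) else if odd (t-d) then A else B)"
      by (simp only: eq1 Wf_dec[OF lt])
    have e2: "Wf h \<sigma>' (c'*h+t-d) = (if t-d = 0 then (if \<sigma>' c' then A else B) else if odd (t-d) then A else B)"
      by (simp only: eq1 Wf_dec[OF lt])
    have "t - d = 0 \<Longrightarrow> t \<le> r" using True d by linarith
    then show ?thesis using e1 e2 c1 by auto
  next
    case False
    have c0: "0 < c" using q(1) d False by (cases c) auto
    have c0': "0 < c'" using q(2) d False by (cases c') auto
    have lt: "h + t - d < h" using False h d by linarith
    have nz: "h + t - d \<noteq> 0" using h d by linarith
    have m1: "c*h = (c-1)*h + h" "c'*h = (c'-1)*h + h" using c0 c0'
      by (metis Suc_diff_1 add.commute mult_Suc)+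
    have eq1: "c*h+t-d = (c-1)*h + (h+t-d)" "c'*h+t-d = (c'-1)*h + (h+t-d)"
      using m1 False h d by simp_all
    have e1: "Wf h \<sigma> (c*h+t-d) = (if odd (h+t-d) then A else B)"
      using nz by (simp only: eq1 Wf_dec[OF lt]) simp
    have e2: "Wf h \<sigma>' (c'*h+t-d) = (if odd (h+t-d) then A else B)"
      using nz by (simp only: eq1 Wf_dec[OF lt]) simp
    show ?thesis using e1 e2 by simp
  qed
qed


lemma win_words:
  assumes h: "2*r < h" and q: "q mod h = x mod h"
    and c1: "q mod h \<le> r \<Longrightarrow> \<sigma> (q div h) = \<sigma>' (x div h)"
    and c2: "h \<le> q mod h + r \<Longrightarrow> \<sigma> (Suc (q div h)) = \<sigma>' (Suc (x div h))"
    and r: "r \<le> q" "r \<le> x" "q + r < n1" "x + r < n2"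
  shows "win r (map (Wf h \<sigma>) [0..<n1]) q (map (Wf h \<sigma>') [0..<n2]) x"
  unfolding win_def
proof (intro allI impI)
  fix d assume d: "d \<le> r"
  have h0: "0 < h" using h by simp
  have t: "q mod h < h" using h0 by simp
  have eqs: "(q div h)*h + q mod h = q" "(x div h)*h + q mod h = x"
    using q by (metis div_mult_mod_eq)+
  have r1: "r \<le> (q div h)*h + q mod h" "r \<le> (x div h)*h + q mod h" unfolding eqs using r by auto
  have W: "Wf h \<sigma> (q+d) = Wf h \<sigma>' (x+d) \<and> Wf h \<sigma> (q-d) = Wf h \<sigma>' (x-d)"
    using Wf_win[OF h t c1 c2 r1 d] unfolding eqs .
  have "q + d < n1" "x + d < n2" "q - d < n1" "x - d < n2" using r d by auto
  then show "map (Wf h \<sigma>) [0..<n1] ! (q+d) = map (Wf h \<sigma>') [0..<n2] ! (x+d) \<and>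
             map (Wf h \<sigma>) [0..<n1] ! (q-d) = map (Wf h \<sigma>') [0..<n2] ! (x-d)"
    using W by simp
qed

lemma pick: fixes h t lo :: nat assumes "0 < h" "t < h" shows "\<exists>c. even c = b \<and> lo \<le> c*h+t \<and> c*h+t < lo + 3*h"
proof -
  define c0 where "c0 = lo div h + 1"
  define c where "c = (if even c0 = b then c0 else c0 + 1)"
  have "even c = b" unfolding c_def by auto
  have "lo < c0 * h"
  proof -
    have "lo = (lo div h)*h + lo mod h" by (metis div_mult_mod_eq)
    moreover have "lo mod h < h" using assms(1) by simp
    moreover have "c0 * h = (lo div h)*h + h" unfolding c0_def by (simp add: algebra_simps)
    ultimately show ?thesis by linarith
  qed
  moreover have "c0 \<le> c" "c \<le> c0 + 1" unfolding c_def by auto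
  ultimately have "lo \<le> c*h+t"
  proof -
    have "c0*h \<le> c*h" using \<open>c0 \<le> c\<close> by simp
    then show ?thesis using \<open>lo < c0*h\<close> by linarith
  qed
  moreover have "c*h + t < (c0+2)*h"
  proof -
    have "c*h \<le> (c0+1)*h" using \<open>c \<le> c0+1\<close> mult_le_mono1 by blast
    then show ?thesis using assms(2) by (simp add: algebra_simps)
  qed
  moreover have "(c0+2)*h \<le> lo + 3*h"
  proof -
    have "(lo div h)*h \<le> lo" by (simp add: div_times_less_eq_dividend)
    then show ?thesis unfolding c0_def by (simp add: algebra_simps)
  qed
  ultimately show ?thesis using \<open>even c = b\<close> by (intro exI[of _ c]) simp
qed

lemma cover:
  assumes h: "2*r < h" and r: "r \<le> q" "q + r < n1" "r \<le> lo" "lo + 3*h + r \<le> n2"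
  shows "\<exists>x. lo \<le> x \<and> x < lo + 3*h \<and> win r (map (Wf h \<sigma>) [0..<n1]) q (map (Wf h even) [0..<n2]) x"
proof -
  have h0: "0 < h" using h by simp
  define t where "t = q mod h"
  have t: "t < h" unfolding t_def using h0 by simp
  define b where "b = (if t \<le> r then \<sigma> (q div h) else \<not> \<sigma> (Suc (q div h)))"
  obtain c where c: "even c = b" "lo \<le> c*h+t" "c*h+t < lo + 3*h" using pick[OF h0 t] by blast
  define x where "x = c*h + t"
  have xd: "x div h = c" "x mod h = t" unfolding x_def using t by simp_all
  have "win r (map (Wf h \<sigma>) [0..<n1]) q (map (Wf h even) [0..<n2]) x"
  proof (rule win_words[OF h])
    show "q mod h = x mod h" using xd t_def by simp
    show "q mod h \<le> r \<Longrightarrow> \<sigma> (q div h) = even (x div h)" using xd c b_def t_def by simp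
    show "h \<le> q mod h + r \<Longrightarrow> \<sigma> (Suc (q div h)) = even (Suc (x div h))"
      using xd c b_def t_def h by auto
    show "r \<le> q" "q + r < n1" by fact+
    show "r \<le> x" "x + r < n2" using c r unfolding x_def by linarith+
  qed
  then show ?thesis using c unfolding x_def by blast
qed

lemma no3_W:
  assumes h: "odd h" "3 \<le> h" shows "no3 (map (Wf h \<sigma>) [0..<n])"
  unfolding no3_def
proof (intro allI impI)
  fix i c assume i: "i + 2 < length (map (Wf h \<sigma>) [0..<n])"
  then have i2: "i + 2 < n" by simp
  let ?w = "map (Wf h \<sigma>) [0..<n]"
  have nth: "\<And>j. j \<le> i + 2 \<Longrightarrow> ?w!j = Wf h \<sigma> j" using i2 by simp
  define t where "t = i mod h"
  define q where "q = i div h"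
  have h0: "0 < h" using h by simp
  have tl: "t < h" unfolding t_def using h0 by simp
  have iq: "i = q*h + t" unfolding q_def t_def by simp
  have hasA: "\<exists>j. i \<le> j \<and> j \<le> i+2 \<and> Wf h \<sigma> j = A" and hasB: "\<exists>j. i \<le> j \<and> j \<le> i+2 \<and> Wf h \<sigma> j = B"
  proof -
    consider "t = 0" | "t = h - 1" | "0 < t" "t + 1 < h" using tl by linarith
    then have "(\<exists>j. i \<le> j \<and> j \<le> i+2 \<and> Wf h \<sigma> j = A) \<and> (\<exists>j. i \<le> j \<and> j \<le> i+2 \<and> Wf h \<sigma> j = B)"
    proof cases
      case 1
      have a: "Wf h \<sigma> (i+1) = A" using Wf_dec[of 1 h \<sigma> q] h iq 1 by (simp add: add.commute)
      have b: "Wf h \<sigma> (i+2) = B" using Wf_dec[of 2 h \<sigma> q] h iq 1 by (simp add: add.commute)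
      show ?thesis
      proof (intro conjI)
        show "\<exists>j. i \<le> j \<and> j \<le> i+2 \<and> Wf h \<sigma> j = A" using a by (intro exI[of _ "i+1"]) simp
        show "\<exists>j. i \<le> j \<and> j \<le> i+2 \<and> Wf h \<sigma> j = B" using b by (intro exI[of _ "i+2"]) simp
      qed
    next
      case 2
      have ev: "even (h - 1)" using h by simp
      have a: "Wf h \<sigma> i = B" using Wf_dec[of "h-1" h \<sigma> q] h iq 2 ev by simp
      have "i + 2 = Suc q * h + 1" using iq 2 h by simp
      then have b: "Wf h \<sigma> (i+2) = A" using Wf_dec[of 1 h \<sigma> "Suc q"] h by simp
      show ?thesis
      proof (intro conjI)
        show "\<exists>j. i \<le> j \<and> j \<le> i+2 \<and> Wf h \<sigma> j = A" using b by (intro exI[of _ "i+2"]) simp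
        show "\<exists>j. i \<le> j \<and> j \<le> i+2 \<and> Wf h \<sigma> j = B" using a by (intro exI[of _ "i"]) simp
      qed
    next
      case 3
      have a: "Wf h \<sigma> i = (if odd t then A else B)" using Wf_dec[OF tl, of \<sigma> q] iq 3 by simp
      have b: "Wf h \<sigma> (i+1) = (if odd (t+1) then A else B)"
        using Wf_dec[OF 3(2), of \<sigma> q] iq 3 by (simp add: add.assoc)
      show ?thesis
      proof (cases "odd t")
        case True
        show ?thesis
        proof (intro conjI)
          show "\<exists>j. i \<le> j \<and> j \<le> i+2 \<and> Wf h \<sigma> j = A" using a True by (intro exI[of _ "i"]) simp
          show "\<exists>j. i \<le> j \<and> j \<le> i+2 \<and> Wf h \<sigma> j = B" using b True by (intro exI[of _ "i+1"]) simp
        qed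
      next
        case False
        show ?thesis
        proof (intro conjI)
          show "\<exists>j. i \<le> j \<and> j \<le> i+2 \<and> Wf h \<sigma> j = A" using b False by (intro exI[of _ "i+1"]) simp
          show "\<exists>j. i \<le> j \<and> j \<le> i+2 \<and> Wf h \<sigma> j = B" using a False by (intro exI[of _ "i"]) simp
        qed
      qed
    qed
    then show "\<exists>j. i \<le> j \<and> j \<le> i+2 \<and> Wf h \<sigma> j = A" "\<exists>j. i \<le> j \<and> j \<le> i+2 \<and> Wf h \<sigma> j = B" by blast+
  qed
  show "\<exists>j. i \<le> j \<and> j \<le> i + 2 \<and> ?w!j = c"
    using hasA hasB nth by (cases c) auto
qed


lemma odd_decomp: "odd (h::nat) \<Longrightarrow> odd (c*h + t) \<longleftrightarrow> (odd c \<noteq> odd t)"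
  by auto

lemma Par_u:
  assumes h: "odd h" "3 \<le> h" and N: "even N" "0 < N"
  shows "Par (map (Wf h even) [0..<N*h])"
  unfolding Par_def
proof (intro conjI impI allI)
  let ?w = "map (Wf h even) [0..<N*h]"
  have h0: "0 < h" using h by simp
  have Nh: "0 < N*h" using N h0 by simp
  show "?w!0 = A" using Nh by (simp add: Wf_def)
  have "N*h = (N-1)*h + h" using N by (cases N) auto
  then have e1: "N*h - 1 = (N-1)*h + (h-1)" using h0 by linarith
  have e2: "Wf h even (N*h - 1) = B" unfolding e1 using Wf_dec[of "h-1" h even "N-1"] h by simp
  have e3: "?w!(N*h-1) = Wf h even (N*h-1)" using Nh by simp
  show "?w!(length ?w - 1) = B" using e2 e3 by simp
  show "even (length ?w)" using N by simp
  fix j assume j: "odd j" "j+1 < length ?w"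
  then have jl: "j + 1 < N*h" by simp
  define t where "t = j mod h"
  define c where "c = j div h"
  have tl: "t < h" unfolding t_def using h0 by simp
  have jq: "j = c*h + t" unfolding c_def t_def by simp
  have par: "odd c \<noteq> odd t" using j(1) jq h odd_decomp by metis
  have "Wf h even j \<noteq> Wf h even (j+1)"
  proof (cases "t + 1 < h")
    case True
    have a: "Wf h even j = (if t = 0 then (if even c then A else B) else if odd t then A else B)"
      using Wf_dec[OF tl, of even c] jq by simp
    have b: "Wf h even (j+1) = (if odd (t+1) then A else B)"
      using Wf_dec[OF True, of even c] jq by (simp add: add.assoc)
    show ?thesis using a b par by auto
  next
    case False
    then have t1: "t = h - 1" using tl by simp
    have a: "Wf h even j = B" using Wf_dec[OF tl, of even c] jq t1 h by simp
    have "j + 1 = Suc c * h + 0" using jq t1 h0 by simp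
    then have b: "Wf h even (j+1) = (if even (Suc c) then A else B)" using Wf_dec[OF h0, of even "Suc c"] by simp
    have "even (h - 1)" using h by simp
    then have "odd c" using par t1 by simp
    then show ?thesis using a b by simp
  qed
  then show "?w!j \<noteq> ?w!(j+1)" using jl by simp
qed

lemma notPar_v:
  assumes h: "odd h" "3 \<le> h" and m: "0 < m"
  shows "\<not> Par (map (Wf h (\<lambda>c. if c \<le> 2*m then even c else odd c)) [0..<(4*m+1)*h])"
proof
  let ?s = "\<lambda>c. if c \<le> 2*m then even c else odd c"
  let ?w = "map (Wf h ?s) [0..<(4*m+1)*h]"
  assume P: "Par ?w"
  have h0: "0 < h" using h by simp
  define j where "j = (2*m+1)*h"
  have "odd j" unfolding j_def using h by simp
  moreover have jl: "j + 1 < length ?w"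
  proof -
    have e: "(4*m+1)*h = (2*m+1)*h + 2*m*h" by (simp add: algebra_simps)
    have hm: "2*h \<le> 2*m*h" using m by simp
    have L: "length ?w = (4*m+1)*h" by simp
    have "j + 1 < (4*m+1)*h" using e hm h unfolding j_def by linarith
    then show ?thesis using L by simp
  qed
  ultimately have "?w!j \<noteq> ?w!(j+1)" using P unfolding Par_def by blast
  moreover have "?w!j = A"
  proof -
    have "Wf h ?s j = A" using Wf_dec[OF h0, of ?s "2*m+1"] unfolding j_def by simp
    moreover have "?w!j = Wf h ?s j" using jl nth_map_upt[of _ "(4*m+1)*h" 0 "Wf h ?s"] by simp
    ultimately show ?thesis by simp
  qed
  moreover have "?w!(j+1) = A"
  proof -
    have "Wf h ?s (j+1) = A" using Wf_dec[of 1 h ?s "2*m+1"] h unfolding j_def by simp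
    moreover have "?w!(j+1) = Wf h ?s (j+1)" using jl nth_map_upt[of _ "(4*m+1)*h" 0 "Wf h ?s"] by simp
    ultimately show ?thesis by simp
  qed
  ultimately show False by simp
qed


lemma Wf_shift: assumes "0 < h" shows "Wf h \<sigma> (i + h) = (if i mod h = 0 then (if \<sigma> (Suc (i div h)) then A else B) else if odd (i mod h) then A else B)"
proof -
  have "(i + h) div h = Suc (i div h)" using assms by (simp add: div_add_self2)
  moreover have "(i + h) mod h = i mod h" by simp
  ultimately show ?thesis unfolding Wf_def by simp
qed

lemma words_exist: "\<exists>u v. u \<in> L_lang \<and> v \<notin> L_lang \<and> u \<noteq> [] \<and> v \<noteq> [] \<and> no3 u \<and> no3 v \<and> eqv K u 0 v 0"
proof -
  define h where "h = 6*K+9"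
  define m where "m = 2*K+4"
  define sv where "sv = (\<lambda>c::nat. if c \<le> 2*m then even c else odd c)"
  define u where "u = map (Wf h even) [0..<4*m*h]"
  define v where "v = map (Wf h sv) [0..<(4*m+1)*h]"
  define C where "C = 2*m*h"
  define Q where "Q = 3*h+4"
  have h: "odd h" "3 \<le> h" "0 < h" unfolding h_def by auto
  have m0: "0 < m" unfolding m_def by simp
  have lu: "length u = 4*m*h" unfolding u_def by simp
  have lv: "length v = 4*m*h + h" unfolding v_def by (simp add: algebra_simps)
  have nu: "\<And>i. i < length u \<Longrightarrow> u!i = Wf h even i" unfolding u_def by simp
  have nv: "\<And>i. i < length v \<Longrightarrow> v!i = Wf h sv i" unfolding v_def by simp
  have C2: "2*C = length u" unfolding C_def lu by simp
  interpret Z1: zone u v h C Q K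
  proof
    show "length v = length u + h" using lu lv by simp
  next
    fix i assume i: "i < C"
    then have "i div h < 2*m" unfolding C_def by (rule less_mult_imp_div_less)
    then have "sv (i div h) = even (i div h)" unfolding sv_def by simp
    then have "Wf h even i = Wf h sv i" unfolding Wf_def by simp
    moreover have "length u \<le> length v" using lu lv by simp
    moreover have "i < length u" using i C2 by linarith
    ultimately show "u!i = v!i" using nu nv by simp
  next
    fix i assume i: "length u \<le> i + C" "i < length u"
    then have "C \<le> i" using C2 by linarith
    then have "2*m*h \<le> i" using C_def by simp
    then have "(2*m*h) div h \<le> i div h" by (rule div_le_mono)
    moreover have "(2*m*h) div h = 2*m" using h(3) by simp
    ultimately have "2*m \<le> i div h" by simp
    then have "sv (Suc (i div h)) = even (i div h)" unfolding sv_def by simp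
    then have "Wf h even i = Wf h sv (i + h)" using Wf_shift[OF h(3), of sv i] unfolding Wf_def by simp
    moreover have "i + h < length v" using i lu lv by simp
    ultimately show "u!i = v!(i+h)" using nu nv i by simp
  next
    have "Suc K * Q + 3*K + 10 = 18*K*K + 52*K + 41" unfolding Q_def h_def by (simp add: algebra_simps)
    moreover have "C = 24*K*K + 84*K + 72" unfolding C_def m_def h_def by (simp add: algebra_simps)
    ultimately show "Suc K * Q + 3*K + 10 \<le> C" by simp
  next
    show "2*C \<le> length u" using C2 by simp
  next
    show "3*K + 8 \<le> Q" unfolding Q_def h_def by simp
  qed
  have Zd: "\<And>k. Z1.Z k = Suc k * Q" unfolding Z1.Z_def ..
  have rd: "\<And>k. Z1.rho k = 3*k+3" unfolding Z1.rho_def ..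
  have hr: "\<And>k. k < K \<Longrightarrow> 2 * Z1.rho k < h" unfolding rd h_def by simp
  have big: "\<And>k. k < K \<Longrightarrow> Z1.Z (Suc k) + Z1.rho (Suc k) + 7 \<le> C" using Z1.Zk by simp
  have ZS: "\<And>k. Z1.Z (Suc k) = Z1.Z k + 3*h + 4" using Z1.Z_Suc unfolding Q_def by simp
  have rZ: "\<And>k. k < K \<Longrightarrow> Z1.rho k + 5 \<le> Z1.Z k" using Z1.rhoQ Z1.ZQ by (meson le_trans less_imp_le_nat)
  have rS: "\<And>k. Z1.rho (Suc k) = Z1.rho k + 3" unfolding rd by simp
  have cP: "\<exists>r. Z1.Z k \<le> r \<and> r + 4 \<le> Z1.Z (Suc k) \<and> win (Z1.rho k) w q u r"
    if k: "k < K" and q: "Z1.Z k \<le> q" "q + Z1.Z k < n1" and w: "w = map (Wf h \<sigma>) [0..<n1]" for k q w n1 \<sigma>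
  proof -
    have a: "Z1.rho k \<le> q" "q + Z1.rho k < n1" "Z1.rho k \<le> Z1.Z k"
      "Z1.Z k + 3*h + Z1.rho k \<le> 4*m*h" using q rZ[OF k] big[OF k] ZS[of k] rS[of k] C2 lu by linarith+
    obtain x where x: "Z1.Z k \<le> x" "x < Z1.Z k + 3*h" "win (Z1.rho k) (map (Wf h \<sigma>) [0..<n1]) q (map (Wf h even) [0..<4*m*h]) x"
      using cover[OF hr[OF k] a] by blast
    show ?thesis using x w ZS[of k] unfolding u_def by (intro exI[of _ x]) simp
  qed
  have cS: "\<exists>r. length u + 4 \<le> r + Z1.Z (Suc k) \<and> r + Z1.Z k < length u \<and> win (Z1.rho k) w q u r"
    if k: "k < K" and q: "Z1.Z k \<le> q" "q + Z1.Z k < n1" and w: "w = map (Wf h \<sigma>) [0..<n1]" for k q w n1 \<sigma>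
  proof -
    define lo where "lo = length u + 4 - Z1.Z (Suc k)"
    have a: "Z1.rho k \<le> q" "q + Z1.rho k < n1" "Z1.rho k \<le> lo"
      "lo + 3*h + Z1.rho k \<le> 4*m*h" unfolding lo_def using q rZ[OF k] big[OF k] ZS[of k] rS[of k] C2 lu by linarith+
    obtain x where x: "lo \<le> x" "x < lo + 3*h" "win (Z1.rho k) (map (Wf h \<sigma>) [0..<n1]) q (map (Wf h even) [0..<4*m*h]) x"
      using cover[OF hr[OF k] a] by blast
    have "length u + 4 \<le> x + Z1.Z (Suc k)" "x + Z1.Z k < length u"
      using x(1,2) big[OF k] C2 ZS[of k] unfolding lo_def by linarith+
    then show ?thesis using x w unfolding u_def by (intro exI[of _ x]) simp
  qed
  interpret Z2: zone2 u v h C Q K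
  proof
    fix k q assume "k < K" "Z1.Z k \<le> q" "q + Z1.Z k < length u"
    then show "\<exists>r. Z1.Z k \<le> r \<and> r + 4 \<le> Z1.Z (Suc k) \<and> win (Z1.rho k) u q u r"
      using cP[of k q "4*m*h" u even] lu unfolding u_def by simp
  next
    fix k q assume "k < K" "Z1.Z k \<le> q" "q + Z1.Z k < length v"
    then show "\<exists>r. Z1.Z k \<le> r \<and> r + 4 \<le> Z1.Z (Suc k) \<and> win (Z1.rho k) v q u r"
      using cP[of k q "(4*m+1)*h" v sv] unfolding v_def by simp
  next
    fix k q assume "k < K" "Z1.Z k \<le> q" "q + Z1.Z k < length u"
    then show "\<exists>r. length u + 4 \<le> r + Z1.Z (Suc k) \<and> r + Z1.Z k < length u \<and> win (Z1.rho k) u q u r"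
      using cS[of k q "4*m*h" u even] lu unfolding u_def by simp
  next
    fix k q assume "k < K" "Z1.Z k \<le> q" "q + Z1.Z k < length v"
    then show "\<exists>r. length u + 4 \<le> r + Z1.Z (Suc k) \<and> r + Z1.Z k < length u \<and> win (Z1.rho k) v q u r"
      using cS[of k q "(4*m+1)*h" v sv] unfolding v_def by simp
  qed
  have "eqv K u 0 v 0" by (rule Z2.eqv_start)
  moreover have "u \<in> L_lang" unfolding L_iff_Par u_def
    using Par_u[OF h(1,2), of "4*m"] m0 by (simp add: mult.assoc)
  moreover have "v \<notin> L_lang" unfolding L_iff_Par v_def sv_def using notPar_v[OF h(1,2) m0] by simp
  moreover have "u \<noteq> []" "v \<noteq> []" using lu lv h m0 by auto
  moreover have "no3 u" "no3 v" unfolding u_def v_def using no3_W h by auto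
  ultimately show ?thesis by blast
qed


definition fAll :: "nat \<Rightarrow> fo \<Rightarrow> fo" where "fAll x \<phi> = FNot (FEx x (FNot \<phi>))"
definition fOr :: "fo \<Rightarrow> fo \<Rightarrow> fo" where "fOr a b = FNot (FAnd (FNot a) (FNot b))"
definition fImp :: "fo \<Rightarrow> fo \<Rightarrow> fo" where "fImp a b = fOr (FNot a) b"
definition fSucc :: "nat \<Rightarrow> nat \<Rightarrow> nat \<Rightarrow> fo" where
  "fSucc x y z = FAnd (FLt x y) (FNot (FEx z (FAnd (FLt x z) (FLt z y))))"
definition fSame :: "nat \<Rightarrow> nat \<Rightarrow> fo" where
  "fSame x y = fOr (FAnd (FLet A x) (FLet A y)) (FAnd (FLet B x) (FLet B y))"
definition fDbl :: "nat \<Rightarrow> nat \<Rightarrow> nat \<Rightarrow> fo" where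
  "fDbl x y z = FEx y (FAnd (fSucc x y z) (fSame x y))"
definition fSS :: "nat \<Rightarrow> nat \<Rightarrow> nat \<Rightarrow> nat \<Rightarrow> fo" where
  "fSS j i m n = FEx m (FAnd (fSucc j m n) (fSame i m))"
definition fOdd :: "nat \<Rightarrow> nat \<Rightarrow> nat \<Rightarrow> nat \<Rightarrow> nat \<Rightarrow> fo" where
  "fOdd i j k m n = fOr
     (FEx j (FAnd (FLt j i) (FAnd (fDbl j m n) (FAnd (FNot (FEx k (FAnd (FLt j k) (FAnd (FLt k i) (fDbl k m n)))))
        (fSS j i m n)))))
     (FAnd (FNot (FEx j (FAnd (FLt j i) (fDbl j m n)))) (FLet B i))"

definition sent :: fo where
  "sent = fOr (FNot (FEx 0 (FEq 0 0)))
    (FAnd (fAll 0 (fImp (FNot (FEx 1 (FLt 1 0))) (FLet A 0)))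
    (FAnd (fAll 0 (fImp (FNot (FEx 1 (FLt 0 1))) (FAnd (FLet B 0) (fOdd 0 1 2 3 4))))
          (fAll 0 (fAll 1 (fImp (FAnd (fSucc 0 1 2) (fOdd 0 2 3 4 5)) (FNot (fSame 0 1)))))))"

lemma sent_fv: "fo_fv sent = {}"
  unfolding sent_def fAll_def fOr_def fImp_def fSucc_def fSame_def fDbl_def fOdd_def fSS_def by auto

definition D :: "word \<Rightarrow> nat \<Rightarrow> bool" where "D w q \<longleftrightarrow> q + 1 < length w \<and> w!q = w!(q+1)"

definition OddS :: "word \<Rightarrow> nat \<Rightarrow> bool" where
  "OddS w p \<longleftrightarrow> (\<exists>q<p. D w q \<and> (\<forall>r. q<r \<and> r<p \<longrightarrow> \<not> D w r) \<and> w!p = w!(q+1))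
     \<or> ((\<forall>q<p. \<not> D w q) \<and> w!p = B)"

lemma sat_fAll: "fo_sat w s (fAll x \<phi>) \<longleftrightarrow> (\<forall>i<length w. fo_sat w (s(x:=i)) \<phi>)"
  unfolding fAll_def by auto
lemma sat_fOr: "fo_sat w s (fOr a b) \<longleftrightarrow> fo_sat w s a \<or> fo_sat w s b"
  unfolding fOr_def by auto
lemma sat_fImp: "fo_sat w s (fImp a b) \<longleftrightarrow> (fo_sat w s a \<longrightarrow> fo_sat w s b)"
  unfolding fImp_def sat_fOr by auto

lemma sat_fSucc: assumes "z \<noteq> x" "z \<noteq> y" "s y < length w"
  shows "fo_sat w s (fSucc x y z) \<longleftrightarrow> s y = Suc (s x)"
proof -
  have "fo_sat w s (fSucc x y z) \<longleftrightarrow> s x < s y \<and> \<not> (\<exists>i<length w. s x < i \<and> i < s y)"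
    unfolding fSucc_def using assms by simp
  also have "\<dots> \<longleftrightarrow> s y = Suc (s x)"
  proof
    assume a: "s x < s y \<and> \<not> (\<exists>i<length w. s x < i \<and> i < s y)"
    show "s y = Suc (s x)"
    proof (rule ccontr)
      assume "s y \<noteq> Suc (s x)"
      then have "Suc (s x) < s y" using a by simp
      then show False using a assms(3) by (metis lessI order.strict_trans)
    qed
  qed auto
  finally show ?thesis .
qed

lemma sat_fSame: "fo_sat w s (fSame x y) \<longleftrightarrow> s x < length w \<and> s y < length w \<and> w!(s x) = w!(s y)"
  unfolding fSame_def sat_fOr by (cases "w!(s x)"; cases "w!(s y)") auto

lemma sat_fDbl: assumes "x \<noteq> y" "y \<noteq> z" "x \<noteq> z"
  shows "fo_sat w s (fDbl x y z) \<longleftrightarrow> D w (s x)"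
proof -
  have "fo_sat w s (fDbl x y z) \<longleftrightarrow> (\<exists>i<length w. i = Suc (s x) \<and> s x < length w \<and> w!(s x) = w!i)"
    unfolding fDbl_def using assms by (auto simp: sat_fSucc sat_fSame)
  also have "\<dots> \<longleftrightarrow> D w (s x)" unfolding D_def by auto
  finally show ?thesis .
qed

lemma sat_fSS: assumes d: "j \<noteq> m" "m \<noteq> n" "j \<noteq> n" "i \<noteq> m" and p: "s i < length w"
  shows "fo_sat w s (fSS j i m n) \<longleftrightarrow> Suc (s j) < length w \<and> w!(s i) = w!(Suc (s j))"
proof -
  have h1: "fo_sat w (s(m:=t)) (fSucc j m n) \<longleftrightarrow> t = Suc (s j)" if "t < length w" for t
    using sat_fSucc[of n j m "s(m:=t)" w] d that by auto
  have h2: "fo_sat w (s(m:=t)) (fSame i m) \<longleftrightarrow> t < length w \<and> w!(s i) = w!t" for t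
    using d p by (simp add: sat_fSame)
  show ?thesis unfolding fSS_def using h1 h2 by auto
qed

lemma sat_fOdd: assumes d: "distinct [i,j,k,m,n]" and p: "s i < length w"
  shows "fo_sat w s (fOdd i j k m n) \<longleftrightarrow> OddS w (s i)"
proof -
  have h3: "fo_sat w (s(j:=q)) (fDbl j m n) \<longleftrightarrow> D w q" for q
    using sat_fDbl[of j m n w "s(j:=q)"] d by simp
  have h4: "fo_sat w (s(j:=q, k:=r)) (fDbl k m n) \<longleftrightarrow> D w r" for q r
    using sat_fDbl[of k m n w "s(j:=q, k:=r)"] d by simp
  have h5: "fo_sat w (s(j:=q)) (fSS j i m n) \<longleftrightarrow> Suc q < length w \<and> w!(s i) = w!(Suc q)" for q
    using sat_fSS[of j m n i "s(j:=q)" w] d p by auto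
  have e1: "fo_sat w s (FEx j (FAnd (FLt j i) (FAnd (fDbl j m n) (FAnd (FNot (FEx k (FAnd (FLt j k) (FAnd (FLt k i) (fDbl k m n)))))
        (fSS j i m n))))) \<longleftrightarrow>
      (\<exists>q<length w. q < s i \<and> D w q \<and> \<not> (\<exists>r<length w. q < r \<and> r < s i \<and> D w r) \<and>
         Suc q < length w \<and> w!(s i) = w!(Suc q))"
    using d p by (simp add: h3 h4 h5)
  have e2: "fo_sat w s (FAnd (FNot (FEx j (FAnd (FLt j i) (fDbl j m n)))) (FLet B i)) \<longleftrightarrow>
      \<not> (\<exists>q<length w. q < s i \<and> D w q) \<and> w!(s i) = B"
    using d p by (simp add: h3)
  have d1: "(\<exists>q<length w. q < s i \<and> D w q \<and> \<not> (\<exists>r<length w. q < r \<and> r < s i \<and> D w r) \<and>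
         Suc q < length w \<and> w!(s i) = w!(Suc q)) \<longleftrightarrow>
      (\<exists>q<s i. D w q \<and> (\<forall>r. q<r \<and> r<s i \<longrightarrow> \<not> D w r) \<and> w!(s i) = w!(q+1))"
  proof
    assume "\<exists>q<length w. q < s i \<and> D w q \<and> \<not> (\<exists>r<length w. q < r \<and> r < s i \<and> D w r) \<and>
         Suc q < length w \<and> w!(s i) = w!(Suc q)"
    then obtain q where q: "q < s i" "D w q" "\<not> (\<exists>r<length w. q < r \<and> r < s i \<and> D w r)" "w!(s i) = w!(Suc q)"
      by blast
    have "\<forall>r. q<r \<and> r<s i \<longrightarrow> \<not> D w r" using q(3) p by (meson order.strict_trans)
    then show "\<exists>q<s i. D w q \<and> (\<forall>r. q<r \<and> r<s i \<longrightarrow> \<not> D w r) \<and> w!(s i) = w!(q+1)"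
      using q by auto
  next
    assume "\<exists>q<s i. D w q \<and> (\<forall>r. q<r \<and> r<s i \<longrightarrow> \<not> D w r) \<and> w!(s i) = w!(q+1)"
    then obtain q where q: "q < s i" "D w q" "\<forall>r. q<r \<and> r<s i \<longrightarrow> \<not> D w r" "w!(s i) = w!(q+1)"
      by blast
    have "q < length w" "Suc q < length w" using q(1,2) p unfolding D_def by auto
    then show "\<exists>q<length w. q < s i \<and> D w q \<and> \<not> (\<exists>r<length w. q < r \<and> r < s i \<and> D w r) \<and>
         Suc q < length w \<and> w!(s i) = w!(Suc q)" using q by (intro exI[of _ q]) auto
  qed
  have d2: "(\<not> (\<exists>q<length w. q < s i \<and> D w q) \<and> w!(s i) = B) \<longleftrightarrow> ((\<forall>q<s i. \<not> D w q) \<and> w!(s i) = B)"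
    using p by (meson order.strict_trans)
  show ?thesis unfolding fOdd_def sat_fOr e1 e2 OddS_def d1 d2 ..
qed


definition FOP :: "word \<Rightarrow> bool" where
  "FOP w \<longleftrightarrow> w = [] \<or> (w!0 = A \<and> w!(length w - 1) = B \<and> OddS w (length w - 1)
      \<and> (\<forall>p. p+1 < length w \<longrightarrow> OddS w p \<longrightarrow> w!p \<noteq> w!(p+1)))"

lemma sat_sent: "fo_sat w s sent \<longleftrightarrow> FOP w"
proof -
  let ?n = "length w"
  have c0: "fo_sat w s (FNot (FEx 0 (FEq 0 0))) \<longleftrightarrow> w = []"
    by simp (metis length_greater_0_conv less_nat_zero_code list.size(3))
  have c1: "fo_sat w s (fAll 0 (fImp (FNot (FEx 1 (FLt 1 0))) (FLet A 0))) \<longleftrightarrow> (w \<noteq> [] \<longrightarrow> w!0 = A)"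
  proof -
    have "fo_sat w s (fAll 0 (fImp (FNot (FEx 1 (FLt 1 0))) (FLet A 0))) \<longleftrightarrow>
        (\<forall>i<?n. \<not>(\<exists>j<?n. j < i) \<longrightarrow> w!i = A)" by (simp add: sat_fAll sat_fImp)
    also have "\<dots> \<longleftrightarrow> (w \<noteq> [] \<longrightarrow> w!0 = A)"
    proof
      assume a: "\<forall>i<?n. \<not>(\<exists>j<?n. j < i) \<longrightarrow> w!i = A"
      show "w \<noteq> [] \<longrightarrow> w!0 = A" using a[rule_format, of 0] by simp
    next
      assume a: "w \<noteq> [] \<longrightarrow> w!0 = A"
      show "\<forall>i<?n. \<not>(\<exists>j<?n. j < i) \<longrightarrow> w!i = A"
      proof (intro allI impI)
        fix i assume "i < ?n" "\<not>(\<exists>j<?n. j < i)"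
        then have "i = 0" by (metis gr0I order.strict_trans)
        then show "w!i = A" using a \<open>i < ?n\<close> by auto
      qed
    qed
    finally show ?thesis .
  qed
  have c2: "fo_sat w s (fAll 0 (fImp (FNot (FEx 1 (FLt 0 1))) (FAnd (FLet B 0) (fOdd 0 1 2 3 4)))) \<longleftrightarrow>
      (w \<noteq> [] \<longrightarrow> w!(?n - 1) = B \<and> OddS w (?n - 1))"
  proof -
    have "fo_sat w s (fAll 0 (fImp (FNot (FEx 1 (FLt 0 1))) (FAnd (FLet B 0) (fOdd 0 1 2 3 4)))) \<longleftrightarrow>
        (\<forall>i<?n. \<not>(\<exists>j<?n. i < j) \<longrightarrow> w!i = B \<and> OddS w i)"
      by (simp add: sat_fAll sat_fImp sat_fOdd)
    also have "\<dots> \<longleftrightarrow> (w \<noteq> [] \<longrightarrow> w!(?n - 1) = B \<and> OddS w (?n - 1))"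
    proof
      assume a: "\<forall>i<?n. \<not>(\<exists>j<?n. i < j) \<longrightarrow> w!i = B \<and> OddS w i"
      show "w \<noteq> [] \<longrightarrow> w!(?n - 1) = B \<and> OddS w (?n - 1)"
      proof
        assume "w \<noteq> []"
        then have "?n - 1 < ?n" "\<not>(\<exists>j<?n. ?n - 1 < j)" by auto
        then show "w!(?n - 1) = B \<and> OddS w (?n - 1)" using a by blast
      qed
    next
      assume a: "w \<noteq> [] \<longrightarrow> w!(?n - 1) = B \<and> OddS w (?n - 1)"
      show "\<forall>i<?n. \<not>(\<exists>j<?n. i < j) \<longrightarrow> w!i = B \<and> OddS w i"
      proof (intro allI impI)
        fix i assume "i < ?n" "\<not>(\<exists>j<?n. i < j)"
        then have "i = ?n - 1" by (metis Suc_lessI diff_Suc_1 lessI)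
        then show "w!i = B \<and> OddS w i" using a \<open>i < ?n\<close> by auto
      qed
    qed
    finally show ?thesis .
  qed
  have c3: "fo_sat w s (fAll 0 (fAll 1 (fImp (FAnd (fSucc 0 1 2) (fOdd 0 2 3 4 5)) (FNot (fSame 0 1))))) \<longleftrightarrow>
      (\<forall>p. p+1 < ?n \<longrightarrow> OddS w p \<longrightarrow> w!p \<noteq> w!(p+1))"
  proof -
    have "fo_sat w s (fAll 0 (fAll 1 (fImp (FAnd (fSucc 0 1 2) (fOdd 0 2 3 4 5)) (FNot (fSame 0 1))))) \<longleftrightarrow>
        (\<forall>i<?n. \<forall>j<?n. j = Suc i \<and> OddS w i \<longrightarrow> w!i \<noteq> w!j)"
      by (simp add: sat_fAll sat_fImp sat_fOdd sat_fSucc sat_fSame)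
    also have "\<dots> \<longleftrightarrow> (\<forall>p. p+1 < ?n \<longrightarrow> OddS w p \<longrightarrow> w!p \<noteq> w!(p+1))" by auto
    finally show ?thesis .
  qed
  show ?thesis unfolding sent_def sat_fOr fo_sat.simps(5) c0 c1 c2 c3 FOP_def by auto
qed

lemma alt:
  assumes nd: "\<forall>r. a \<le> r \<and> r < b \<longrightarrow> \<not> D w r" and b: "b < length w"
  shows "a + l \<le> b \<Longrightarrow> (w!(a+l) = w!a \<longleftrightarrow> even l)"
proof (induction l)
  case 0 then show ?case by simp
next
  case (Suc l)
  then have "a + l < b" by simp
  then have "\<not> D w (a+l)" using nd by simp
  moreover have "a + l + 1 < length w" using Suc.prems b by simp
  ultimately have ne: "w!(a+l) \<noteq> w!(a + Suc l)" unfolding D_def by simp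
  have IH: "w!(a+l) = w!a \<longleftrightarrow> even l" using Suc by simp
  show ?case using ne IH by (cases "w!(a+l)"; cases "w!(a+Suc l)"; cases "w!a") auto
qed

lemma OddS_correct:
  assumes A0: "w!0 = A" and p: "p < length w" and ev: "\<forall>q<p. D w q \<longrightarrow> even q"
  shows "OddS w p \<longleftrightarrow> odd p"
proof (cases "\<exists>q<p. D w q")
  case True
  define S where "S = {q. q < p \<and> D w q}"
  have fS: "finite S" unfolding S_def by simp
  have neS: "S \<noteq> {}" using True unfolding S_def by auto
  define q0 where "q0 = Max S"
  have q0S: "q0 \<in> S" unfolding q0_def using fS neS by simp
  have q0max: "\<And>q. q \<in> S \<Longrightarrow> q \<le> q0" unfolding q0_def using fS by simp
  have q0: "q0 < p" "D w q0" "even q0" using q0S ev unfolding S_def by auto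
  have nd: "\<forall>r. q0 + 1 \<le> r \<and> r < p \<longrightarrow> \<not> D w r" using q0max unfolding S_def by fastforce
  have key: "w!p = w!(q0+1) \<longleftrightarrow> odd p"
  proof -
    have "q0 + 1 + (p - (q0+1)) \<le> p" using q0(1) by simp
    then have "w!(q0+1+(p-(q0+1))) = w!(q0+1) \<longleftrightarrow> even (p - (q0+1))" using alt[OF nd p] by blast
    moreover have "q0+1+(p-(q0+1)) = p" using q0 by simp
    moreover have "even (p - (q0+1)) \<longleftrightarrow> odd p" using q0 by (simp add: even_diff_nat)
    ultimately show ?thesis by simp
  qed
  have "OddS w p \<longleftrightarrow> w!p = w!(q0+1)"
  proof
    assume "OddS w p"
    then show "w!p = w!(q0+1)"
      unfolding OddS_def
    proof
      assume "\<exists>q<p. D w q \<and> (\<forall>r. q<r \<and> r<p \<longrightarrow> \<not> D w r) \<and> w!p = w!(q+1)"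
      then obtain q where q: "q<p" "D w q" "\<forall>r. q<r \<and> r<p \<longrightarrow> \<not> D w r" "w!p = w!(q+1)" by blast
      have "q \<le> q0" using q q0max unfolding S_def by simp
      moreover have "\<not> q < q0" using q(3) q0 by blast
      ultimately have "q = q0" by simp
      then show ?thesis using q by simp
    next
      assume "(\<forall>q<p. \<not> D w q) \<and> w!p = B"
      then show ?thesis using q0 by blast
    qed
  next
    assume "w!p = w!(q0+1)"
    then show "OddS w p" unfolding OddS_def using q0 nd by auto
  qed
  then show ?thesis using key by simp
next
  case False
  have nd: "\<forall>r. 0 \<le> r \<and> r < p \<longrightarrow> \<not> D w r" using False by auto
  have "w!(0+p) = w!0 \<longleftrightarrow> even p" using alt[OF nd p, of p] by simp
  then have "w!p = B \<longleftrightarrow> odd p" using A0 by (cases "w!p") auto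
  then show ?thesis unfolding OddS_def using False by auto
qed

lemma FOP_Par: "FOP w \<longleftrightarrow> Par w"
proof (cases "w = []")
  case True then show ?thesis unfolding FOP_def Par_def by simp
next
  case ne: False
  show ?thesis
  proof
    assume F: "FOP w"
    then have F0: "w!0 = A" "w!(length w - 1) = B" "OddS w (length w - 1)"
      and Fc: "\<And>p. p+1 < length w \<Longrightarrow> OddS w p \<Longrightarrow> w!p \<noteq> w!(p+1)"
      using ne unfolding FOP_def by auto
    have H: "\<forall>q. D w q \<longrightarrow> even q"
    proof (rule ccontr)
      assume "\<not> (\<forall>q. D w q \<longrightarrow> even q)"
      then have ex: "\<exists>q. D w q \<and> odd q" by auto
      define q where "q = (LEAST q. D w q \<and> odd q)"
      have q: "D w q" "odd q" using LeastI_ex[OF ex] unfolding q_def by auto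
      have qmin: "\<forall>q'<q. D w q' \<longrightarrow> even q'" using not_less_Least unfolding q_def by blast
      have ql: "q < length w" using q unfolding D_def by simp
      have "OddS w q" using OddS_correct[OF F0(1) ql qmin] q by simp
      then have "w!q \<noteq> w!(q+1)" using Fc q unfolding D_def by auto
      then show False using q unfolding D_def by simp
    qed
    have corr: "\<And>p. p < length w \<Longrightarrow> OddS w p \<longleftrightarrow> odd p" using OddS_correct[OF F0(1)] H by blast
    have "odd (length w - 1)" using corr[of "length w - 1"] F0(3) ne by simp
    then have "even (length w)" using ne by (cases "length w") auto
    moreover have "\<forall>j. odd j \<longrightarrow> j+1 < length w \<longrightarrow> w!j \<noteq> w!(j+1)" using Fc corr by auto
    ultimately show "Par w" unfolding Par_def using F0 by simp
  next
    assume P: "Par w"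
    then have P0: "w!0 = A" "w!(length w - 1) = B" "even (length w)"
      and Pc: "\<And>j. odd j \<Longrightarrow> j+1 < length w \<Longrightarrow> w!j \<noteq> w!(j+1)" using ne unfolding Par_def by auto
    have H: "\<forall>q. D w q \<longrightarrow> even q" using Pc unfolding D_def by auto
    have corr: "\<And>p. p < length w \<Longrightarrow> OddS w p \<longleftrightarrow> odd p" using OddS_correct[OF P0(1)] H by blast
    have "OddS w (length w - 1)" using corr[of "length w - 1"] P0(3) ne by (cases "length w") auto
    moreover have "\<forall>p. p+1 < length w \<longrightarrow> OddS w p \<longrightarrow> w!p \<noteq> w!(p+1)" using corr Pc by auto
    ultimately show "FOP w" unfolding FOP_def using P0 by simp
  qed
qed

theorem fo_def: "fo_definable L_lang"
  unfolding fo_definable_def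
  using sent_fv sat_sent FOP_Par L_iff_Par by blast


theorem corollary7:
  shows "fo_definable L_lang \<and> \<not> fo2_inv_definable L_lang"
proof
  show "fo_definable L_lang" by (rule fo_def)
  show "\<not> fo2_inv_definable L_lang"
  proof
    assume "fo2_inv_definable L_lang"
    then obtain \<phi> where \<phi>: "\<forall>w. w \<in> L_lang \<longleftrightarrow> fo2_sat w (\<lambda>_. 0) \<phi>"
      unfolding fo2_inv_definable_def by blast
    obtain u v where uv: "u \<in> L_lang" "v \<notin> L_lang" "u \<noteq> []" "v \<noteq> []" "no3 u" "no3 v"
      "eqv (fdepth \<phi>) u 0 v 0"
      using words_exist[of "fdepth \<phi>"] by blast
    have "fo2_sat u (\<lambda>_. 0) \<phi> = fo2_sat v (\<lambda>_. 0) \<phi>"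
      using sentence_equiv[OF le_refl uv(5,6,3,4,7)] .
    then show False using \<phi> uv(1,2) by blast
  qed
qed

end
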